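(* The class of models of $\mathbb{R}\mathsf{FR}$ has the joint embedding property and the amalgamation property.
   Context: An $\mathbb{R}$-forest is a complete extended ($[0,\infty]$-valued) metric space such that each set $\{y:d(x,y)<\infty\}$ is an $\mathbb{R}$-tree (uniquely arc-connected complete metric space with arcs isometric to real intervals). A function $f:X^2\to[0,1]$ is $1$-$1$-Lipschitz if $x\mapsto f(a,x)$ and $x\mapsto f(x,a)$ are $1$-Lipschitz for every $a\in X$. $\mathbb{R}\mathsf{FR}$ is the theory in the language consisting of an extended metric and a $[0,1]$-valued binary predicate $R$ saying that the underlying metric space is an $\mathbb{R}$-forest and $R$ is $1$-$1$-Lipschitz. The empty structure is allowed as a model. *)

theory Defs
  imports "HOL-Analysis.Analysis" "HOL-Library.Extended_Nonnegative_Real"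
begin

text \<open>Values of d and R outside S are irrelevant.\<close>

definition ext_metric :: "'a set \<Rightarrow> ('a \<Rightarrow> 'a \<Rightarrow> ennreal) \<Rightarrow> bool" where
  "ext_metric S d \<longleftrightarrow>
     (\<forall>x\<in>S. \<forall>y\<in>S. d x y = 0 \<longleftrightarrow> x = y) \<and>
     (\<forall>x\<in>S. \<forall>y\<in>S. d x y = d y x) \<and>
     (\<forall>x\<in>S. \<forall>y\<in>S. \<forall>z\<in>S. d x z \<le> d x y + d y z)"

definition ext_cauchy :: "('a \<Rightarrow> 'a \<Rightarrow> ennreal) \<Rightarrow> (nat \<Rightarrow> 'a) \<Rightarrow> bool" where
  "ext_cauchy d s \<longleftrightarrow>
     (\<forall>e::real. e > 0 \<longrightarrow> (\<exists>N. \<forall>m\<ge>N. \<forall>n\<ge>N. d (s m) (s n) < ennreal e))"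

definition ext_converges_to :: "('a \<Rightarrow> 'a \<Rightarrow> ennreal) \<Rightarrow> (nat \<Rightarrow> 'a) \<Rightarrow> 'a \<Rightarrow> bool" where
  "ext_converges_to d s x \<longleftrightarrow>
     (\<forall>e::real. e > 0 \<longrightarrow> (\<exists>N. \<forall>n\<ge>N. d (s n) x < ennreal e))"

definition ext_complete :: "'a set \<Rightarrow> ('a \<Rightarrow> 'a \<Rightarrow> ennreal) \<Rightarrow> bool" where
  "ext_complete S d \<longleftrightarrow>
     (\<forall>s. (\<forall>n. s n \<in> S) \<and> ext_cauchy d s \<longrightarrow> (\<exists>x\<in>S. ext_converges_to d s x))"

definition path_cont_on :: "real set \<Rightarrow> ('a \<Rightarrow> 'a \<Rightarrow> ennreal) \<Rightarrow> (real \<Rightarrow> 'a) \<Rightarrow> bool" where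
  "path_cont_on I d g \<longleftrightarrow>
     (\<forall>t\<in>I. \<forall>e::real. e > 0 \<longrightarrow>
        (\<exists>\<delta>>0. \<forall>s\<in>I. \<bar>s - t\<bar> < \<delta> \<longrightarrow> d (g s) (g t) < ennreal e))"

text \<open>A is an arc in T from x to y: the image of a topological embedding
  of a compact real interval [a,b] (a = b allowed, giving the degenerate arc {x}).
  Since [a,b] is compact, a continuous injection from it is a topological embedding.\<close>
definition arc_between :: "'a set \<Rightarrow> ('a \<Rightarrow> 'a \<Rightarrow> ennreal) \<Rightarrow> 'a \<Rightarrow> 'a \<Rightarrow> 'a set \<Rightarrow> bool" where
  "arc_between T d x y A \<longleftrightarrow>
     (\<exists>a b (g :: real \<Rightarrow> 'a). a \<le> b \<and> g ` {a..b} = A \<and> A \<subseteq> T \<and>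
        inj_on g {a..b} \<and> path_cont_on {a..b} d g \<and> g a = x \<and> g b = y)"

definition r_tree :: "'a set \<Rightarrow> ('a \<Rightarrow> 'a \<Rightarrow> ennreal) \<Rightarrow> bool" where
  "r_tree T d \<longleftrightarrow>
     ext_metric T d \<and> (\<forall>x\<in>T. \<forall>y\<in>T. d x y < \<infinity>) \<and> ext_complete T d \<and>
     (\<forall>x\<in>T. \<forall>y\<in>T. \<exists>!A. arc_between T d x y A) \<and>
     (\<forall>x\<in>T. \<forall>y\<in>T. \<forall>A. arc_between T d x y A \<longrightarrow>
        (\<exists>L::real. \<exists>\<phi>. L \<ge> 0 \<and> \<phi> ` {0..L} = A \<and>
           (\<forall>s\<in>{0..L}. \<forall>t\<in>{0..L}. d (\<phi> s) (\<phi> t) = ennreal \<bar>s - t\<bar>)))"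

definition r_forest :: "'a set \<Rightarrow> ('a \<Rightarrow> 'a \<Rightarrow> ennreal) \<Rightarrow> bool" where
  "r_forest S d \<longleftrightarrow>
     ext_metric S d \<and> ext_complete S d \<and>
     (\<forall>x\<in>S. r_tree {y\<in>S. d x y < \<infinity>} d)"

definition lip_1_1 :: "'a set \<Rightarrow> ('a \<Rightarrow> 'a \<Rightarrow> ennreal) \<Rightarrow> ('a \<Rightarrow> 'a \<Rightarrow> real) \<Rightarrow> bool" where
  "lip_1_1 S d R \<longleftrightarrow>
     (\<forall>x\<in>S. \<forall>y\<in>S. 0 \<le> R x y \<and> R x y \<le> 1) \<and>
     (\<forall>a\<in>S. \<forall>x\<in>S. \<forall>y\<in>S. ennreal \<bar>R a x - R a y\<bar> \<le> d x y) \<and>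
     (\<forall>a\<in>S. \<forall>x\<in>S. \<forall>y\<in>S. ennreal \<bar>R x a - R y a\<bar> \<le> d x y)"

definition RFR_model :: "'a set \<Rightarrow> ('a \<Rightarrow> 'a \<Rightarrow> ennreal) \<Rightarrow> ('a \<Rightarrow> 'a \<Rightarrow> real) \<Rightarrow> bool" where
  "RFR_model S d R \<longleftrightarrow> r_forest S d \<and> lip_1_1 S d R"

definition struct_embedding ::
  "'a set \<Rightarrow> ('a \<Rightarrow> 'a \<Rightarrow> ennreal) \<Rightarrow> ('a \<Rightarrow> 'a \<Rightarrow> real) \<Rightarrow>
   'b set \<Rightarrow> ('b \<Rightarrow> 'b \<Rightarrow> ennreal) \<Rightarrow> ('b \<Rightarrow> 'b \<Rightarrow> real) \<Rightarrow> ('a \<Rightarrow> 'b) \<Rightarrow> bool" where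
  "struct_embedding S1 d1 R1 S2 d2 R2 f \<longleftrightarrow>
     f ` S1 \<subseteq> S2 \<and>
     (\<forall>x\<in>S1. \<forall>y\<in>S1. d2 (f x) (f y) = d1 x y \<and> R2 (f x) (f y) = R1 x y)"

end

theory Submission
  imports Defs
begin


lemma le_INF_add:
  fixes z c :: ennreal
  assumes "\<And>a. a\<in>A \<Longrightarrow> z \<le> X a + c"
  shows "z \<le> (INF a\<in>A. X a) + c"
proof (cases "c = top")
  case True then show ?thesis by simp
next
  case False
  have "z - c \<le> X a" if "a\<in>A" for a
    using assms[OF that] by (simp add: False add.commute ennreal_minus_le_iff)
  then have "z - c \<le> (INF a\<in>A. X a)" by (rule INF_greatest)
  then show ?thesis by (simp add: False add.commute ennreal_minus_le_iff)
qed

lemma le_INF_add2: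
  fixes z :: ennreal
  assumes "\<And>a b. a\<in>A \<Longrightarrow> b\<in>A' \<Longrightarrow> z \<le> X a + Y b"
  shows "z \<le> (INF a\<in>A. X a) + (INF b\<in>A'. Y b)"
proof -
  have "z \<le> X a + (INF b\<in>A'. Y b)" if "a\<in>A" for a
    using le_INF_add[of A' z Y "X a"] assms[OF that] by (simp add: add.commute)
  then show ?thesis by (rule le_INF_add)
qed

definition iso_on :: "real set \<Rightarrow> ('a \<Rightarrow> 'a \<Rightarrow> ennreal) \<Rightarrow> (real \<Rightarrow> 'a) \<Rightarrow> bool" where
  "iso_on I d g \<longleftrightarrow> (\<forall>s\<in>I. \<forall>t\<in>I. d (g s) (g t) = ennreal \<bar>s - t\<bar>)"

definition lip1_on :: "real set \<Rightarrow> ('a \<Rightarrow> 'a \<Rightarrow> ennreal) \<Rightarrow> (real \<Rightarrow> 'a) \<Rightarrow> bool" where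
  "lip1_on I d g \<longleftrightarrow> (\<forall>s\<in>I. \<forall>t\<in>I. d (g s) (g t) \<le> ennreal \<bar>s - t\<bar>)"

lemma iso_lip: "iso_on I d g \<Longrightarrow> lip1_on I d g"
  unfolding iso_on_def lip1_on_def by simp

lemma iso_on_subset: "iso_on I d g \<Longrightarrow> J \<subseteq> I \<Longrightarrow> iso_on J d g"
  unfolding iso_on_def by blast

lemma lip_path_cont: "lip1_on I d g \<Longrightarrow> path_cont_on I d g"
  unfolding lip1_on_def path_cont_on_def
proof (intro ballI allI impI)
  fix t e assume L: "\<forall>s\<in>I. \<forall>t\<in>I. d (g s) (g t) \<le> ennreal \<bar>s - t\<bar>" and t: "t \<in> I" and e: "(0::real) < e"
  show "\<exists>\<delta>>0. \<forall>s\<in>I. \<bar>s - t\<bar> < \<delta> \<longrightarrow> d (g s) (g t) < ennreal e"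
  proof (intro exI[of _ e] conjI ballI impI)
    fix s assume "s \<in> I" "\<bar>s - t\<bar> < e"
    then have "d (g s) (g t) \<le> ennreal \<bar>s - t\<bar>" using L t by blast
    also have "\<dots> < ennreal e" using \<open>\<bar>s - t\<bar> < e\<close> by (simp add: ennreal_lessI e)
    finally show "d (g s) (g t) < ennreal e" .
  qed (use e in auto)
qed

lemma path_cont_subset: "path_cont_on I d g \<Longrightarrow> J \<subseteq> I \<Longrightarrow> path_cont_on J d g"
  unfolding path_cont_on_def by (meson subsetD)

lemma arc_mono: "arc_between T d x y G \<Longrightarrow> G \<subseteq> T' \<Longrightarrow> arc_between T' d x y G"
  unfolding arc_between_def by blast

lemma arc_sub:
  assumes "path_cont_on {a..b} d g" "inj_on g {a..b}" "a \<le> s" "s \<le> t" "t \<le> b" "g ` {s..t} \<subseteq> T"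
  shows "arc_between T d (g s) (g t) (g ` {s..t})"
  unfolding arc_between_def
  apply (rule exI[of _ s], rule exI[of _ t], rule exI[of _ g])
  using assms by (auto intro: path_cont_subset inj_on_subset)

lemma lip_arc:
  assumes "a \<le> b" "lip1_on {a..b} d g" "inj_on g {a..b}" "g ` {a..b} \<subseteq> T"
  shows "arc_between T d (g a) (g b) (g ` {a..b})"
  using arc_sub[OF lip_path_cont[OF assms(2)] assms(3), of a b T] assms by auto

lemma ext_metric_subset: "ext_metric M d \<Longrightarrow> S \<subseteq> M \<Longrightarrow> ext_metric S d"
  unfolding ext_metric_def by (meson subsetD)

lemma iso_inj:
  assumes "ext_metric M d" "g ` I \<subseteq> M" "iso_on I d g"
  shows "inj_on g I"
proof (rule inj_onI)
  fix s t assume st: "s \<in> I" "t \<in> I" "g s = g t"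
  then have "d (g s) (g t) = 0" using assms(1,2) unfolding ext_metric_def by auto
  then have "ennreal \<bar>s - t\<bar> = 0" using assms(3) st unfolding iso_on_def by metis
  then show "s = t" by simp
qed

lemma arc_ends: "arc_between T d x y G \<Longrightarrow> x \<in> G \<and> y \<in> G \<and> G \<subseteq> T"
  unfolding arc_between_def by force


definition cat :: "real \<Rightarrow> (real \<Rightarrow> 'a) \<Rightarrow> (real \<Rightarrow> 'a) \<Rightarrow> real \<Rightarrow> 'a" where
  "cat D1 p q t = (if t \<le> D1 then p t else q (t - D1))"

lemma cat_image:
  assumes "0 \<le> D1" "0 \<le> D2" "p D1 = q 0"
  shows "cat D1 p q ` {0..D1+D2} = p ` {0..D1} \<union> q ` {0..D2}"
proof (intro equalityI subsetI)
  fix z assume "z \<in> cat D1 p q ` {0..D1+D2}"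
  then obtain t where t: "t \<in> {0..D1+D2}" "z = cat D1 p q t" by blast
  show "z \<in> p ` {0..D1} \<union> q ` {0..D2}"
  proof (cases "t \<le> D1")
    case True then show ?thesis using t by (auto simp: cat_def)
  next
    case False then have "z = q (t - D1)" "t - D1 \<in> {0..D2}" using t by (auto simp: cat_def)
    then show ?thesis by blast
  qed
next
  fix z assume "z \<in> p ` {0..D1} \<union> q ` {0..D2}"
  then show "z \<in> cat D1 p q ` {0..D1+D2}"
  proof
    assume "z \<in> p ` {0..D1}"
    then obtain s where "s \<in> {0..D1}" "z = p s" by blast
    then show ?thesis using assms by (intro image_eqI[of _ _ s]) (auto simp: cat_def)
  next
    assume "z \<in> q ` {0..D2}"
    then obtain s where s: "s \<in> {0..D2}" "z = q s" by blast
    show ?thesis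
    proof (cases "s = 0")
      case True then show ?thesis using assms s by (intro image_eqI[of _ _ D1]) (auto simp: cat_def)
    next
      case False then show ?thesis using assms s by (intro image_eqI[of _ _ "s + D1"]) (auto simp: cat_def)
    qed
  qed
qed

lemma cat_start: "0 \<le> D1 \<Longrightarrow> cat D1 p q 0 = p 0" by (simp add: cat_def)
lemma cat_end: "0 \<le> D1 \<Longrightarrow> 0 \<le> D2 \<Longrightarrow> p D1 = q 0 \<Longrightarrow> cat D1 p q (D1 + D2) = q D2"
  by (auto simp: cat_def)

lemma em_sym: "ext_metric M d \<Longrightarrow> x \<in> M \<Longrightarrow> y \<in> M \<Longrightarrow> d x y = d y x"
  unfolding ext_metric_def by blast
lemma em_tri: "ext_metric M d \<Longrightarrow> x \<in> M \<Longrightarrow> y \<in> M \<Longrightarrow> z \<in> M \<Longrightarrow> d x z \<le> d x y + d y z"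
  unfolding ext_metric_def by blast
lemma em_zero: "ext_metric M d \<Longrightarrow> x \<in> M \<Longrightarrow> d x x = 0"
  unfolding ext_metric_def by blast
lemma em_eq: "ext_metric M d \<Longrightarrow> x \<in> M \<Longrightarrow> y \<in> M \<Longrightarrow> d x y = 0 \<Longrightarrow> x = y"
  unfolding ext_metric_def by blast

lemma cat_gen:
  assumes "0 \<le> D1" "0 \<le> D2" "iso_on {0..D1} d p" "iso_on {0..D2} d q"
    and cross: "\<And>s t. s \<in> {0..D1} \<Longrightarrow> t \<in> {0..D2} \<Longrightarrow> R (d (p s) (q t)) (ennreal (D1 - s + t))"
    and crossb: "\<And>s t. s \<in> {0..D1} \<Longrightarrow> t \<in> {0..D2} \<Longrightarrow> R (d (q t) (p s)) (ennreal (D1 - s + t))"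
    and R: "\<And>x. R x x"
  shows "\<forall>s\<in>{0..D1+D2}. \<forall>t\<in>{0..D1+D2}. R (d (cat D1 p q s) (cat D1 p q t)) (ennreal \<bar>s - t\<bar>)"
proof (intro ballI)
  fix s t assume s: "s \<in> {0..D1+D2}" and t: "t \<in> {0..D1+D2}"
  show "R (d (cat D1 p q s) (cat D1 p q t)) (ennreal \<bar>s - t\<bar>)"
  proof (cases "s \<le> D1"; cases "t \<le> D1")
    assume a: "s \<le> D1" "t \<le> D1"
    then have "d (p s) (p t) = ennreal \<bar>s - t\<bar>" using assms(3) s t unfolding iso_on_def by simp
    then show ?thesis using a R unfolding cat_def by simp
  next
    assume "\<not> s \<le> D1" "\<not> t \<le> D1"
    then have "d (q (s - D1)) (q (t - D1)) = ennreal \<bar>(s - D1) - (t - D1)\<bar>"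
      using assms(4) s t unfolding iso_on_def by auto
    then show ?thesis using \<open>\<not> s \<le> D1\<close> \<open>\<not> t \<le> D1\<close> R unfolding cat_def by simp
  next
    assume a: "s \<le> D1" "\<not> t \<le> D1"
    then have "R (d (p s) (q (t - D1))) (ennreal (D1 - s + (t - D1)))" using s t by (intro cross) auto
    moreover have "D1 - s + (t - D1) = \<bar>s - t\<bar>" using a by auto
    ultimately show ?thesis using a unfolding cat_def by simp
  next
    assume a: "\<not> s \<le> D1" "t \<le> D1"
    then have "R (d (q (s - D1)) (p t)) (ennreal (D1 - t + (s - D1)))" using s t by (intro crossb) auto
    moreover have "D1 - t + (s - D1) = \<bar>s - t\<bar>" using a by auto
    ultimately show ?thesis using a unfolding cat_def by simp
  qed
qed

lemma cat_lip:
  assumes M: "ext_metric M d" "p ` {0..D1} \<subseteq> M" "q ` {0..D2} \<subseteq> M"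
    and "0 \<le> D1" "0 \<le> D2" "iso_on {0..D1} d p" "iso_on {0..D2} d q" "p D1 = q 0"
  shows "lip1_on {0..D1+D2} d (cat D1 p q)"
proof -
  have cr: "d (p s) (q t) \<le> ennreal (D1 - s + t)" if "s \<in> {0..D1}" "t \<in> {0..D2}" for s t
  proof -
    have m: "p s \<in> M" "q t \<in> M" "q 0 \<in> M" using M that assms(5) by auto
    have "d (p s) (q t) \<le> d (p s) (p D1) + d (q 0) (q t)"
      using em_tri[OF M(1) m(1) m(3) m(2)] assms(8) by simp
    also have "\<dots> = ennreal (D1 - s) + ennreal t"
      using assms(6,7) that assms(4,5) unfolding iso_on_def by auto
    also have "\<dots> = ennreal (D1 - s + t)" using that by (simp add: ennreal_plus)
    finally show ?thesis .
  qed
  have crb: "d (q t) (p s) \<le> ennreal (D1 - s + t)" if "s \<in> {0..D1}" "t \<in> {0..D2}" for s t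
  proof -
    have m: "p s \<in> M" "q t \<in> M" using M that by auto
    show ?thesis using cr[OF that] em_sym[OF M(1) m(2) m(1)] by simp
  qed
  show ?thesis unfolding lip1_on_def
    by (rule cat_gen[of D1 D2 d p q "(\<le>)"]) (use assms cr crb in auto)
qed

lemma cat_iso:
  assumes M: "ext_metric M d" "p ` {0..D1} \<subseteq> M" "q ` {0..D2} \<subseteq> M"
    and "0 \<le> D1" "0 \<le> D2" "iso_on {0..D1} d p" "iso_on {0..D2} d q"
    and cr: "\<And>s t. s \<in> {0..D1} \<Longrightarrow> t \<in> {0..D2} \<Longrightarrow> d (p s) (q t) = ennreal (D1 - s + t)"
  shows "iso_on {0..D1+D2} d (cat D1 p q)"
proof -
  have crb: "d (q t) (p s) = ennreal (D1 - s + t)" if "s \<in> {0..D1}" "t \<in> {0..D2}" for s t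
  proof -
    have m: "p s \<in> M" "q t \<in> M" using M that by auto
    show ?thesis using cr[OF that] em_sym[OF M(1) m(2) m(1)] by simp
  qed
  show ?thesis unfolding iso_on_def
    by (rule cat_gen[of D1 D2 d p q "(=)"]) (use assms crb in auto)
qed

lemma cat_inj:
  assumes M: "ext_metric M d" "p ` {0..D1} \<subseteq> M" "q ` {0..D2} \<subseteq> M"
    and "0 \<le> D1" "0 \<le> D2" "iso_on {0..D1} d p" "iso_on {0..D2} d q"
    and int: "p ` {0..D1} \<inter> q ` {0..D2} \<subseteq> {q 0}"
  shows "inj_on (cat D1 p q) {0..D1+D2}"
proof (rule inj_onI)
  have ip: "inj_on p {0..D1}" by (rule iso_inj[OF M(1,2) assms(6)])
  have iq: "inj_on q {0..D2}" by (rule iso_inj[OF M(1,3) assms(7)])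
  have key: False if "s \<in> {0..D1}" "t \<in> {0..D1+D2}" "\<not> t \<le> D1" "p s = q (t - D1)" for s t
  proof -
    have "t - D1 \<in> {0..D2}" using that by auto
    then have "q (t - D1) \<in> p ` {0..D1} \<inter> q ` {0..D2}" using that by (metis IntI imageI)
    then have "q (t - D1) = q 0" using int by blast
    then have "t - D1 = 0" using iq that assms(5) by (auto dest: inj_onD)
    then show False using that by simp
  qed
  fix s t assume s: "s \<in> {0..D1+D2}" and t: "t \<in> {0..D1+D2}" and eq: "cat D1 p q s = cat D1 p q t"
  show "s = t"
  proof (cases "s \<le> D1"; cases "t \<le> D1")
    assume "s \<le> D1" "t \<le> D1" then show ?thesis using eq s t ip by (auto simp: cat_def dest: inj_onD)
  next
    assume a: "\<not> s \<le> D1" "\<not> t \<le> D1"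
    then have "q (s - D1) = q (t - D1)" using eq by (simp add: cat_def)
    then have "s - D1 = t - D1" using iq a s t by (auto dest!: inj_onD)
    then show ?thesis by simp
  next
    assume a: "s \<le> D1" "\<not> t \<le> D1"
    then show ?thesis using key[of s t] eq s t by (auto simp: cat_def)
  next
    assume a: "\<not> s \<le> D1" "t \<le> D1"
    then show ?thesis using key[of t s] eq s t by (auto simp: cat_def)
  qed
qed


lemma tree_em: "r_tree T d \<Longrightarrow> ext_metric T d"
  unfolding r_tree_def by (elim conjE)

lemma tree_eu: "r_tree T d \<Longrightarrow> \<forall>x\<in>T. \<forall>y\<in>T. \<exists>!A. arc_between T d x y A"
  unfolding r_tree_def by (elim conjE)

lemma tree_exists: "r_tree T d \<Longrightarrow> x \<in> T \<Longrightarrow> y \<in> T \<Longrightarrow> \<exists>G. arc_between T d x y G"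
  using tree_eu by fast

lemma tree_unique: "r_tree T d \<Longrightarrow> x \<in> T \<Longrightarrow> y \<in> T \<Longrightarrow> arc_between T d x y G \<Longrightarrow>
   arc_between T d x y G' \<Longrightarrow> G = G'"
  using tree_eu by fast

lemma tree_isoarc: "r_tree T d \<Longrightarrow> x \<in> T \<Longrightarrow> y \<in> T \<Longrightarrow> arc_between T d x y G \<Longrightarrow>
   \<exists>L::real. \<exists>\<phi>. L \<ge> 0 \<and> \<phi> ` {0..L} = G \<and>
           (\<forall>s\<in>{0..L}. \<forall>t\<in>{0..L}. d (\<phi> s) (\<phi> t) = ennreal \<bar>s - t\<bar>)"
  unfolding r_tree_def by (elim conjE) fast

lemma tree_geo:
  assumes tr: "r_tree T d" and xy: "x \<in> T" "y \<in> T" and arc: "arc_between T d x y G"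
  shows "\<exists>\<psi> D. 0 \<le> D \<and> d x y = ennreal D \<and> \<psi> 0 = x \<and> \<psi> D = y \<and> \<psi> ` {0..D} = G \<and> iso_on {0..D} d \<psi>"
proof -
  obtain L \<phi> where L: "L \<ge> 0" "\<phi> ` {0..L} = G"
    and iso: "\<forall>s\<in>{0..L}. \<forall>t\<in>{0..L}. d (\<phi> s) (\<phi> t) = ennreal \<bar>s - t\<bar>"
    using tree_isoarc[OF tr xy arc] by blast
  have em: "ext_metric T d" using tr by (rule tree_em)
  have G: "x \<in> G" "y \<in> G" "G \<subseteq> T" using arc_ends[OF arc] by auto
  obtain s0 where s0: "s0 \<in> {0..L}" "\<phi> s0 = x" using G L by blast
  obtain s1 where s1: "s1 \<in> {0..L}" "\<phi> s1 = y" using G L by blast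
  define \<sigma> :: real where "\<sigma> = (if s0 \<le> s1 then 1 else -1)"
  define D where "D = \<bar>s1 - s0\<bar>"
  define \<psi> where "\<psi> = (\<lambda>t. \<phi> (s0 + \<sigma> * t))"
  have inr: "s0 + \<sigma> * t \<in> {0..L}" if "t \<in> {0..D}" for t
  proof (cases "s0 \<le> s1")
    case True
    then have "\<sigma> = 1" "D = s1 - s0" unfolding \<sigma>_def D_def by auto
    then show ?thesis using that s0(1) s1(1) by auto
  next
    case False
    then have "\<sigma> = -1" "D = s0 - s1" unfolding \<sigma>_def D_def by auto
    then show ?thesis using that s0(1) s1(1) by auto
  qed
  have isoP: "iso_on {0..D} d \<psi>"
    unfolding iso_on_def
  proof (intro ballI)
    fix s t assume st: "s \<in> {0..D}" "t \<in> {0..D}"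
    have "d (\<psi> s) (\<psi> t) = ennreal \<bar>(s0 + \<sigma> * s) - (s0 + \<sigma> * t)\<bar>"
      unfolding \<psi>_def using iso inr[OF st(1)] inr[OF st(2)] by blast
    also have "\<bar>(s0 + \<sigma> * s) - (s0 + \<sigma> * t)\<bar> = \<bar>s - t\<bar>"
    proof (cases "s0 \<le> s1")
      case True then show ?thesis unfolding \<sigma>_def by simp
    next
      case False then have "\<sigma> = -1" unfolding \<sigma>_def by simp
      then show ?thesis by (simp add: abs_minus_commute)
    qed
    finally show "d (\<psi> s) (\<psi> t) = ennreal \<bar>s - t\<bar>" .
  qed
  have D0: "0 \<le> D" unfolding D_def by simp
  have p0: "\<psi> 0 = x" unfolding \<psi>_def using s0 by simp
  have "s0 + \<sigma> * D = s1"
  proof (cases "s0 \<le> s1")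
    case True then show ?thesis unfolding \<sigma>_def D_def by simp
  next
    case False then show ?thesis unfolding \<sigma>_def D_def by simp
  qed
  then have pD: "\<psi> D = y" unfolding \<psi>_def using s1 by auto
  have sub: "\<psi> ` {0..D} \<subseteq> G"
  proof
    fix z assume "z \<in> \<psi> ` {0..D}"
    then obtain t where t: "t \<in> {0..D}" "z = \<psi> t" by blast
    then show "z \<in> G" unfolding \<psi>_def using inr[OF t(1)] L(2) by blast
  qed
  have inj: "inj_on \<psi> {0..D}" using iso_inj[OF em _ isoP] sub G by blast
  have "arc_between T d (\<psi> 0) (\<psi> D) (\<psi> ` {0..D})"
    using lip_arc[OF D0 iso_lip[OF isoP] inj] sub G by blast
  then have img: "\<psi> ` {0..D} = G" using tree_unique[OF tr xy _ arc] p0 pD by simp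
  have "d (\<phi> s0) (\<phi> s1) = ennreal \<bar>s0 - s1\<bar>" using iso s0(1) s1(1) by blast
  moreover have "\<bar>s0 - s1\<bar> = D" unfolding D_def by (rule abs_minus_commute)
  ultimately have "d x y = ennreal D" using s0(2) s1(2) by simp
  then show ?thesis using D0 p0 pD img isoP by blast
qed

lemma tree_point:
  assumes tr: "r_tree T d" and xy: "x \<in> T" "y \<in> T" and arc: "arc_between T d x y G" and u: "u \<in> G"
  shows "d x y = d x u + d u y" "\<And>G'. arc_between T d x u G' \<Longrightarrow> G' \<subseteq> G"
    "\<And>G'. arc_between T d u y G' \<Longrightarrow> G' \<subseteq> G"
proof -
  obtain \<psi> D where P: "0 \<le> D" "d x y = ennreal D" "\<psi> 0 = x" "\<psi> D = y" "\<psi> ` {0..D} = G" "iso_on {0..D} d \<psi>"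
    using tree_geo[OF tr xy arc] by blast
  have em: "ext_metric T d" using tr by (rule tree_em)
  have GT: "G \<subseteq> T" using arc_ends[OF arc] by auto
  obtain t where t: "t \<in> {0..D}" "\<psi> t = u" using u P by blast
  have "d (\<psi> 0) (\<psi> t) = ennreal \<bar>0 - t\<bar>" using P(1,6) t(1) unfolding iso_on_def by simp
  then have "d x u = ennreal t" using P(3) t by simp
  moreover have "d (\<psi> t) (\<psi> D) = ennreal \<bar>t - D\<bar>" using P(1,6) t(1) unfolding iso_on_def by simp
  then have "d u y = ennreal (D - t)" using P(4) t by simp
  ultimately show "d x y = d x u + d u y" using P t by (simp add: ennreal_plus[symmetric])
  have inj: "inj_on \<psi> {0..D}" using iso_inj[OF em _ P(6)] P GT by blast
  have s1: "\<psi> ` {0..t} \<subseteq> T" "\<psi> ` {t..D} \<subseteq> T" using t P(5) GT by auto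
  have a1: "arc_between T d x u (\<psi> ` {0..t})"
    using s1 arc_sub[OF lip_path_cont[OF iso_lip[OF P(6)]] inj, of 0 t T] t P GT by auto
  have a2: "arc_between T d u y (\<psi> ` {t..D})"
    using s1 arc_sub[OF lip_path_cont[OF iso_lip[OF P(6)]] inj, of t D T] t P GT by auto
  have uT: "u \<in> T" using u GT by blast
  have sub: "\<psi> ` {0..t} \<subseteq> G" "\<psi> ` {t..D} \<subseteq> G" using P(5) t by auto
  show "\<And>G'. arc_between T d x u G' \<Longrightarrow> G' \<subseteq> G"
  proof -
    fix G' assume "arc_between T d x u G'"
    then have "\<psi> ` {0..t} = G'" using tree_unique[OF tr xy(1) uT a1] by blast
    then show "G' \<subseteq> G" using sub by blast
  qed
  show "\<And>G'. arc_between T d u y G' \<Longrightarrow> G' \<subseteq> G"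
  proof -
    fix G' assume "arc_between T d u y G'"
    then have "\<psi> ` {t..D} = G'" using tree_unique[OF tr uT xy(2) a2] by blast
    then show "G' \<subseteq> G" using sub by blast
  qed
qed

lemma tree_concat:
  assumes tr: "r_tree T d" and uvw: "u \<in> T" "v \<in> T" "w \<in> T"
    and a1: "arc_between T d u v G1" and a2: "arc_between T d v w G2" and int: "G1 \<inter> G2 \<subseteq> {v}"
  shows "arc_between T d u w (G1 \<union> G2)" "d u w = d u v + d v w"
proof -
  have em: "ext_metric T d" using tr by (rule tree_em)
  obtain p D1 where P: "0 \<le> D1" "d u v = ennreal D1" "p 0 = u" "p D1 = v" "p ` {0..D1} = G1" "iso_on {0..D1} d p"
    using tree_geo[OF tr uvw(1,2) a1] by blast
  obtain q D2 where Q: "0 \<le> D2" "d v w = ennreal D2" "q 0 = v" "q D2 = w" "q ` {0..D2} = G2" "iso_on {0..D2} d q"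
    using tree_geo[OF tr uvw(2,3) a2] by blast
  have GT: "G1 \<subseteq> T" "G2 \<subseteq> T" using arc_ends[OF a1] arc_ends[OF a2] by auto
  have lip: "lip1_on {0..D1+D2} d (cat D1 p q)"
    by (rule cat_lip[OF em]) (use P Q GT in auto)
  have inj: "inj_on (cat D1 p q) {0..D1+D2}"
    by (rule cat_inj[OF em]) (use P Q GT int in auto)
  have img: "cat D1 p q ` {0..D1+D2} = G1 \<union> G2"
    using cat_image[of D1 D2 p q] P Q by auto
  have "arc_between T d (cat D1 p q 0) (cat D1 p q (D1+D2)) (cat D1 p q ` {0..D1+D2})"
    by (rule lip_arc[OF _ lip inj]) (use P Q img GT in auto)
  then show arc: "arc_between T d u w (G1 \<union> G2)"
    using img cat_start[of D1 p q] cat_end[of D1 D2 p q] P Q by auto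
  have "v \<in> G1 \<union> G2" using arc_ends[OF a1] by auto
  then show "d u w = d u v + d v w" using tree_point(1)[OF tr uvw(1,3) arc] by blast
qed


lemma add_lt_half: fixes a b :: ennreal
  assumes "a < ennreal (e/2)" "b < ennreal (e/2)" shows "a + b < ennreal e"
  by (metis add_mono_ennreal assms(1,2) field_sum_of_halves)

lemma forest_em: "r_forest S d \<Longrightarrow> ext_metric S d"
  unfolding r_forest_def by (elim conjE)
lemma forest_complete: "r_forest S d \<Longrightarrow> ext_complete S d"
  unfolding r_forest_def by (elim conjE)
lemma forest_tree: "r_forest S d \<Longrightarrow> x \<in> S \<Longrightarrow> r_tree {y\<in>S. d x y < \<infinity>} d"
  unfolding r_forest_def by (elim conjE) fast

lemma complete_conv:
  assumes "ext_complete S d" "\<And>n. s n \<in> S" "ext_cauchy d s"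
  shows "\<exists>x\<in>S. ext_converges_to d s x"
  using assms unfolding ext_complete_def by blast

lemma small_le_zero:
  fixes x :: ennreal
  assumes "\<And>e::real. 0 < e \<Longrightarrow> x \<le> ennreal e"
  shows "x = 0"
proof -
  have "x \<le> 0" by (rule ennreal_le_epsilon) (use assms in simp)
  then show ?thesis by simp
qed

lemma gen_closed:
  assumes em: "ext_metric M d" and SM: "S \<subseteq> M" and cS: "ext_complete S d" and x: "x \<in> M"
    and close: "\<And>e::real. 0 < e \<Longrightarrow> \<exists>y\<in>S. d x y < ennreal e"
  shows "x \<in> S"
proof -
  have "\<forall>n. \<exists>y\<in>S. d x y < ennreal (inverse (real (Suc n)))"
    using close by simp
  then obtain y where y: "\<And>n. y n \<in> S" "\<And>n. d x (y n) < ennreal (inverse (real (Suc n)))"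
    by metis
  have yM: "y n \<in> M" for n using y SM by blast
  have small: "\<exists>N. \<forall>n\<ge>N. inverse (real (Suc n)) < e" if e0: "0 < e" for e :: real
  proof -
    obtain N where N: "inverse (real (Suc N)) < e" using reals_Archimedean[OF e0] by blast
    have "inverse (real (Suc n)) < e" if "N \<le> n" for n
    proof -
      have "inverse (real (Suc n)) \<le> inverse (real (Suc N))" using that by (simp add: field_simps)
      then show ?thesis using N by linarith
    qed
    then show ?thesis by blast
  qed
  have cau: "ext_cauchy d y" unfolding ext_cauchy_def
  proof (intro allI impI)
    fix e :: real assume e: "0 < e"
    obtain N where N: "\<And>n. n \<ge> N \<Longrightarrow> inverse (real (Suc n)) < e/2" using small[of "e/2"] e by auto
    have "d (y m) (y n) < ennreal e" if "m \<ge> N" "n \<ge> N" for m n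
    proof -
      have "d (y m) (y n) \<le> d (y m) x + d x (y n)" using em_tri[OF em yM x yM] .
      also have "d (y m) x = d x (y m)" using em_sym[OF em yM x] .
      also have "d x (y m) + d x (y n) < ennreal e"
      proof (rule add_lt_half)
        show "d x (y m) < ennreal (e/2)" using y(2)[of m] N[OF that(1)]
          by (meson ennreal_leI less_le_trans less_imp_le)
        show "d x (y n) < ennreal (e/2)" using y(2)[of n] N[OF that(2)]
          by (meson ennreal_leI less_le_trans less_imp_le)
      qed
      finally show ?thesis .
    qed
    then show "\<exists>N. \<forall>m\<ge>N. \<forall>n\<ge>N. d (y m) (y n) < ennreal e" by blast
  qed
  obtain z where z: "z \<in> S" "ext_converges_to d y z" using complete_conv[OF cS y(1) cau] by blast
  have zM: "z \<in> M" using z SM by blast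
  have "d x z = 0"
  proof (rule small_le_zero)
    fix e :: real assume e: "0 < e"
    obtain N1 where N1: "\<And>n. n \<ge> N1 \<Longrightarrow> d (y n) z < ennreal (e/2)"
      using z(2) e unfolding ext_converges_to_def by (meson half_gt_zero)
    obtain N2 where N2: "\<And>n. n \<ge> N2 \<Longrightarrow> inverse (real (Suc n)) < e/2" using small[of "e/2"] e by auto
    define n where "n = max N1 N2"
    have "d x z \<le> d x (y n) + d (y n) z" using em_tri[OF em x yM zM] .
    also have "\<dots> < ennreal e"
    proof (rule add_lt_half)
      show "d x (y n) < ennreal (e/2)" using y(2)[of n] N2[of n] unfolding n_def
        by (meson ennreal_leI less_le_trans less_imp_le max.cobounded2)
      show "d (y n) z < ennreal (e/2)" using N1[of n] unfolding n_def by simp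
    qed
    finally show "d x z \<le> ennreal e" by simp
  qed
  then have "x = z" using em_eq[OF em x zM] by simp
  then show ?thesis using z by simp
qed

lemma gen_sep:
  assumes em: "ext_metric M d" and SM: "S \<subseteq> M" and cS: "ext_complete S d" and x: "x \<in> M" "x \<notin> S"
  shows "\<exists>e::real>0. \<forall>y\<in>S. ennreal e \<le> d x y"
  using gen_closed[OF em SM cS x(1)] x(2) by (meson not_le)

lemma gen_freq:
  assumes em: "ext_metric M d" and SM: "S \<subseteq> M" and cS: "ext_complete S d"
    and sM: "\<And>n. s n \<in> M" and cau: "ext_cauchy d s" and fr: "\<And>N. \<exists>n\<ge>N. s n \<in> S"
  shows "\<exists>z\<in>S. ext_converges_to d s z"
proof -
  define idx where "idx n = (LEAST m. n \<le> m \<and> s m \<in> S)" for n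
  have idx: "n \<le> idx n \<and> s (idx n) \<in> S" for n
    unfolding idx_def by (rule LeastI_ex) (use fr in blast)
  define t where "t n = s (idx n)" for n
  have tS: "t n \<in> S" for n using idx unfolding t_def by blast
  have caut: "ext_cauchy d t" unfolding ext_cauchy_def
  proof (intro allI impI)
    fix e :: real assume "0 < e"
    then obtain N where N: "\<forall>m\<ge>N. \<forall>n\<ge>N. d (s m) (s n) < ennreal e" using cau unfolding ext_cauchy_def by blast
    have "\<forall>m\<ge>N. \<forall>n\<ge>N. d (t m) (t n) < ennreal e"
      unfolding t_def using N idx by (meson order_trans)
    then show "\<exists>N. \<forall>m\<ge>N. \<forall>n\<ge>N. d (t m) (t n) < ennreal e" by blast
  qed
  obtain z where z: "z \<in> S" "ext_converges_to d t z" using complete_conv[OF cS tS caut] by blast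
  have zM: "z \<in> M" using z SM by blast
  have "ext_converges_to d s z" unfolding ext_converges_to_def
  proof (intro allI impI)
    fix e :: real assume e: "0 < e"
    obtain N1 where N1: "\<forall>m\<ge>N1. \<forall>n\<ge>N1. d (s m) (s n) < ennreal (e/2)"
      using cau e unfolding ext_cauchy_def by (meson half_gt_zero)
    obtain N2 where N2: "\<forall>n\<ge>N2. d (t n) z < ennreal (e/2)"
      using z(2) e unfolding ext_converges_to_def by (meson half_gt_zero)
    have "d (s n) z < ennreal e" if "n \<ge> max N1 N2" for n
    proof -
      have "d (s n) z \<le> d (s n) (t n) + d (t n) z" using em_tri[OF em sM sM zM] unfolding t_def .
      also have "\<dots> < ennreal e"
      proof (rule add_lt_half)
        show "d (s n) (t n) < ennreal (e/2)" unfolding t_def using N1 idx[of n] that by auto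
        show "d (t n) z < ennreal (e/2)" using N2 that by auto
      qed
      finally show ?thesis .
    qed
    then show "\<exists>N. \<forall>n\<ge>N. d (s n) z < ennreal e" by blast
  qed
  then show ?thesis using z by blast
qed

lemma preimage_closed:
  assumes pc: "path_cont_on {a..b} d g" and em: "ext_metric M d" and gM: "g ` {a..b} \<subseteq> M"
    and sep: "\<And>x. x \<in> M \<Longrightarrow> x \<notin> S \<Longrightarrow> \<exists>e::real>0. \<forall>y\<in>S. ennreal e \<le> d x y"
  shows "closed {t\<in>{a..b}. g t \<in> S}"
  unfolding closed_sequential_limits
proof (intro allI impI)
  fix x l assume H: "(\<forall>n. x n \<in> {t \<in> {a..b}. g t \<in> S}) \<and> x \<longlonglongrightarrow> l"
  have lab: "l \<in> {a..b}"
    using closed_sequential_limits[THEN iffD1, OF closed_atLeastAtMost[of a b]] H by blast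
  show "l \<in> {t \<in> {a..b}. g t \<in> S}"
  proof (rule ccontr)
    assume "l \<notin> {t \<in> {a..b}. g t \<in> S}"
    then have nl: "g l \<notin> S" using lab by blast
    have glM: "g l \<in> M" using gM lab by blast
    obtain e :: real where e: "e > 0" "\<forall>y\<in>S. ennreal e \<le> d (g l) y" using sep[OF glM nl] by blast
    obtain \<delta> where \<delta>: "\<delta> > 0" "\<forall>s\<in>{a..b}. \<bar>s - l\<bar> < \<delta> \<longrightarrow> d (g s) (g l) < ennreal e"
      using pc lab e(1) unfolding path_cont_on_def by blast
    obtain n0 where "\<forall>n\<ge>n0. dist (x n) l < \<delta>" using H \<delta>(1) unfolding lim_sequentially by blast
    then have "\<bar>x n0 - l\<bar> < \<delta>" by (simp add: dist_real_def)
    then have "d (g (x n0)) (g l) < ennreal e" using \<delta>(2) H by blast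
    moreover have "g (x n0) \<in> S" "x n0 \<in> {a..b}" using H by auto
    moreover have "d (g (x n0)) (g l) = d (g l) (g (x n0))"
      using em_sym[OF em _ glM, of "g (x n0)"] gM \<open>x n0 \<in> {a..b}\<close> by blast
    ultimately show False using e(2) by (metis not_le)
  qed
qed


lemma lt_add_eps: fixes x :: ennreal assumes "x < top" "0 < e" shows "x < x + ennreal e"
  using assms by (cases x rule: ennreal_cases) (auto simp: ennreal_plus[symmetric] simp del: ennreal_plus intro!: ennreal_lessI)

lemma INF_add_const_le:
  fixes c :: ennreal
  shows "(INF a\<in>A. G a + c) \<le> (INF a\<in>A. G a) + c"
proof (cases "(INF a\<in>A. G a) + c = top")
  case True then show ?thesis by (metis top_greatest)
next
  case False
  then have n: "(INF a\<in>A. G a) \<noteq> top" "c \<noteq> top" by auto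
  have fin: "(INF a\<in>A. G a) < top" by (metis n(1) less_top)
  show ?thesis
  proof (rule ennreal_le_epsilon)
    fix e :: real assume e: "0 < e"
    have "(INF a\<in>A. G a) < (INF a\<in>A. G a) + ennreal e"
      using fin(1) e by (rule lt_add_eps)
    then obtain a where a: "a \<in> A" "G a < (INF a\<in>A. G a) + ennreal e"
      by (subst (asm) INF_less_iff) blast
    have "(INF a\<in>A. G a + c) \<le> G a + c" using a(1) by (rule INF_lower)
    also have "\<dots> \<le> (INF a\<in>A. G a) + ennreal e + c" using a(2) by (simp add: add_right_mono)
    finally show "(INF a\<in>A. G a + c) \<le> (INF a\<in>A. G a) + c + ennreal e" by (simp add: ac_simps)
  qed
qed

lemma INF_const_add_le:
  fixes c :: ennreal
  shows "(INF a\<in>A. c + G a) \<le> c + (INF a\<in>A. G a)"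
  using INF_add_const_le[of G c A] by (simp add: add.commute)

locale glue =
  fixes B C :: "'a set" and d :: "'a \<Rightarrow> 'a \<Rightarrow> ennreal"
  assumes fB: "r_forest B d" and fC: "r_forest C d" and fA: "r_forest (B \<inter> C) d"
    and symN: "\<And>x y. x \<in> B \<union> C \<Longrightarrow> y \<in> B \<union> C \<Longrightarrow> d x y = d y x"
    and cross: "\<And>u v. u \<in> B \<Longrightarrow> v \<in> C \<Longrightarrow> d u v = (INF a\<in>B \<inter> C. d u a + d a v)"
begin

lemma emB: "ext_metric B d" using fB by (rule forest_em)
lemma emC: "ext_metric C d" using fC by (rule forest_em)
lemma emA: "ext_metric (B \<inter> C) d" using fA by (rule forest_em)

lemma cross': assumes "u \<in> C" "v \<in> B" shows "d u v = (INF a\<in>B \<inter> C. d u a + d a v)"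
proof -
  have "d u v = d v u" by (rule symN) (use assms in auto)
  also have "\<dots> = (INF a\<in>B \<inter> C. d v a + d a u)" using cross assms by blast
  also have "\<dots> = (INF a\<in>B \<inter> C. d u a + d a v)"
  proof (rule INF_cong[OF refl])
    fix a assume "a \<in> B \<inter> C"
    then have "d v a = d a v" "d a u = d u a" by (auto intro!: symN simp: assms)
    then show "d v a + d a u = d u a + d a v" by (simp add: add.commute)
  qed
  finally show ?thesis .
qed

lemma swap: "glue C B d"
proof
  show "r_forest C d" by (rule fC)
  show "r_forest B d" by (rule fB)
  show "r_forest (C \<inter> B) d" using fA by (simp only: Int_commute[of C B])
  show "\<And>x y. x \<in> C \<union> B \<Longrightarrow> y \<in> C \<union> B \<Longrightarrow> d x y = d y x"
    by (rule symN) auto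
  show "\<And>u v. u \<in> C \<Longrightarrow> v \<in> B \<Longrightarrow> d u v = (INF a\<in>C \<inter> B. d u a + d a v)"
    using cross' by (simp only: Int_commute[of C B])
qed

lemma zeroBC: assumes x: "x \<in> B" and y: "y \<in> C" and z: "d x y = 0" shows "x = y"
proof -
  have close: "\<exists>a\<in>B \<inter> C. d x a < ennreal e \<and> d a y < ennreal e" if e: "0 < e" for e :: real
  proof -
    have "(INF a\<in>B \<inter> C. d x a + d a y) < ennreal e" using cross[OF x y] z e by simp
    then obtain a where a: "a \<in> B \<inter> C" "d x a + d a y < ennreal e" by (subst (asm) INF_less_iff) blast
    have "d x a \<le> d x a + d a y" "d a y \<le> d x a + d a y" by simp_all
    then show ?thesis using a by (meson le_less_trans)
  qed
  have xA: "x \<in> B \<inter> C"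
  proof (rule gen_closed[OF emB _ forest_complete[OF fA] x])
    show "\<And>e. 0 < e \<Longrightarrow> \<exists>y\<in>B \<inter> C. d x y < ennreal e" using close by blast
  qed auto
  have yA: "y \<in> B \<inter> C"
  proof (rule gen_closed[OF emC _ forest_complete[OF fA] y])
    fix e :: real assume "0 < e"
    then obtain a where a: "a \<in> B \<inter> C" "d a y < ennreal e" using close by blast
    have "d y a = d a y" using symN a y by blast
    then show "\<exists>a\<in>B \<inter> C. d y a < ennreal e" using a by (intro bexI[of _ a]) auto
  qed auto
  show "x = y" using em_eq[OF emB] xA yA z by blast
qed

lemma tri_B:
  assumes x: "x \<in> B" and y: "y \<in> B \<union> C" and z: "z \<in> B \<union> C"
  shows "d x z \<le> d x y + d y z"
proof -
  consider "y \<in> B" "z \<in> B" | "y \<in> B" "z \<in> C" | "y \<in> C" "z \<in> C" | "y \<in> C" "z \<in> B"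
    using y z by blast
  then show ?thesis
  proof cases
    case 1 show ?thesis using em_tri[OF emB x 1] .
  next
    case 2
    have "d x z = (INF a\<in>B \<inter> C. d x a + d a z)" using cross[OF x 2(2)] .
    also have "\<dots> \<le> (INF a\<in>B \<inter> C. d x y + (d y a + d a z))"
    proof (rule INF_mono)
      fix a assume a: "a \<in> B \<inter> C"
      have "d x a \<le> d x y + d y a" using em_tri[OF emB x 2(1), of a] a by blast
      then have "d x a + d a z \<le> (d x y + d y a) + d a z" by (rule add_right_mono)
      then have "d x a + d a z \<le> d x y + (d y a + d a z)" by (simp only: add.assoc)
      then show "\<exists>a'\<in>B \<inter> C. d x a' + d a' z \<le> d x y + (d y a + d a z)" using a by blast
    qed
    also have "\<dots> \<le> d x y + (INF a\<in>B \<inter> C. d y a + d a z)" by (rule INF_const_add_le)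
    also have "(INF a\<in>B \<inter> C. d y a + d a z) = d y z" using cross[OF 2] by simp
    finally show ?thesis .
  next
    case 3
    have "d x z = (INF a\<in>B \<inter> C. d x a + d a z)" using cross[OF x 3(2)] .
    also have "\<dots> \<le> (INF a\<in>B \<inter> C. (d x a + d a y) + d y z)"
    proof (rule INF_mono)
      fix a assume a: "a \<in> B \<inter> C"
      have "d a z \<le> d a y + d y z" using em_tri[OF emC _ 3(1) 3(2), of a] a by blast
      then have "d x a + d a z \<le> d x a + (d a y + d y z)" by (rule add_left_mono)
      then have "d x a + d a z \<le> (d x a + d a y) + d y z" by (simp only: add.assoc)
      then show "\<exists>a'\<in>B \<inter> C. d x a' + d a' z \<le> (d x a + d a y) + d y z" using a by blast
    qed
    also have "\<dots> \<le> (INF a\<in>B \<inter> C. d x a + d a y) + d y z" by (rule INF_add_const_le)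
    also have "(INF a\<in>B \<inter> C. d x a + d a y) = d x y" using cross[OF x 3(1)] by simp
    finally show ?thesis .
  next
    case 4
    have "d x z \<le> (INF a\<in>B \<inter> C. d x a + d a y) + (INF a\<in>B \<inter> C. d y a + d a z)"
    proof (rule le_INF_add2)
      fix a a' assume a: "a \<in> B \<inter> C" and a': "a' \<in> B \<inter> C"
      have h1: "d x z \<le> d x a + d a z" using em_tri[OF emB x _ 4(2), of a] a by blast
      have h2: "d a z \<le> d a a' + d a' z" using em_tri[OF emB _ _ 4(2), of a a'] a a' by blast
      have h3: "d a a' \<le> d a y + d y a'" using em_tri[OF emC _ 4(1), of a a'] a a' by blast
      have "d a a' + d a' z \<le> (d a y + d y a') + d a' z" using h3 by (rule add_right_mono)
      then have "d a z \<le> (d a y + d y a') + d a' z" using h2 by (rule order_trans[rotated])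
      then have "d x a + d a z \<le> d x a + ((d a y + d y a') + d a' z)" by (rule add_left_mono)
      also have "\<dots> = d x a + d a y + (d y a' + d a' z)" by (simp only: add.assoc)
      finally show "d x z \<le> d x a + d a y + (d y a' + d a' z)" using h1 by (rule order_trans[rotated])
    qed
    also have "\<dots> = d x y + d y z" using cross[OF x 4(1)] cross'[OF 4] by simp
    finally show ?thesis .
  qed
qed

end


lemma fin_tri: "ext_metric M d \<Longrightarrow> x \<in> M \<Longrightarrow> y \<in> M \<Longrightarrow> z \<in> M \<Longrightarrow> d x y < \<infinity> \<Longrightarrow> d y z < \<infinity> \<Longrightarrow> d x z < \<infinity>"
proof -
  assume a: "ext_metric M d" "x \<in> M" "y \<in> M" "z \<in> M" "d x y < \<infinity>" "d y z < \<infinity>"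
  have "d x z \<le> d x y + d y z" using em_tri[OF a(1-4)] .
  moreover have "d x y + d y z < \<infinity>" using a(5,6) by (simp add: ennreal_add_less_top)
  ultimately show "d x z < \<infinity>" by (rule le_less_trans)
qed

lemma fin_sym: "ext_metric M d \<Longrightarrow> x \<in> M \<Longrightarrow> y \<in> M \<Longrightarrow> d x y < \<infinity> \<Longrightarrow> d y x < \<infinity>"
  by (metis em_sym)

context glue begin

lemma em_N: "ext_metric (B \<union> C) d"
proof -
  interpret sw: glue C B d by (rule swap)
  have z: "d x x = 0" if "x \<in> B \<union> C" for x
    using that em_zero[OF emB] em_zero[OF emC] by blast
  have e: "x = y" if H: "x \<in> B \<union> C" "y \<in> B \<union> C" "d x y = 0" for x y
  proof -
    consider "x \<in> B" "y \<in> B" | "x \<in> C" "y \<in> C" | "x \<in> B" "y \<in> C" | "x \<in> C" "y \<in> B"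
      using H(1,2) by blast
    then show ?thesis
    proof cases
      case 1 then show ?thesis using em_eq[OF emB 1 H(3)] by simp
    next
      case 2 then show ?thesis using em_eq[OF emC 2 H(3)] by simp
    next
      case 3 then show ?thesis using zeroBC[OF 3 H(3)] by simp
    next
      case 4
      have "d y x = 0" using symN[OF H(1,2)] H(3) by simp
      then show ?thesis using zeroBC[OF 4(2,1)] by simp
    qed
  qed
  have t: "d x z \<le> d x y + d y z" if "x \<in> B \<union> C" "y \<in> B \<union> C" "z \<in> B \<union> C" for x y z
  proof (cases "x \<in> B")
    case True then show ?thesis using tri_B that by blast
  next
    case False then have "x \<in> C" using that by blast
    then show ?thesis using sw.tri_B[of x y z] that by (simp add: Un_commute)
  qed
  show ?thesis unfolding ext_metric_def
  proof (intro conjI ballI)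
    fix x y assume xy: "x \<in> B \<union> C" "y \<in> B \<union> C"
    show "(d x y = 0) = (x = y)" using z[OF xy(1)] e[OF xy] by blast
    show "d x y = d y x" using symN[OF xy] .
  next
    fix x y w assume "x \<in> B \<union> C" "y \<in> B \<union> C" "w \<in> B \<union> C"
    then show "d x w \<le> d x y + d y w" by (rule t)
  qed
qed

lemma sepB: "x \<in> B \<union> C \<Longrightarrow> x \<notin> B \<Longrightarrow> \<exists>e::real>0. \<forall>y\<in>B. ennreal e \<le> d x y"
  using gen_sep[OF em_N _ forest_complete[OF fB]] by blast

lemma sepA: "x \<in> B \<union> C \<Longrightarrow> x \<notin> B \<inter> C \<Longrightarrow> \<exists>e::real>0. \<forall>y\<in>B \<inter> C. ennreal e \<le> d x y"
  using gen_sep[OF em_N _ forest_complete[OF fA]] by blast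

lemma sepC: "x \<in> B \<union> C \<Longrightarrow> x \<notin> C \<Longrightarrow> \<exists>e::real>0. \<forall>y\<in>C. ennreal e \<le> d x y"
  using gen_sep[OF em_N _ forest_complete[OF fC]] by blast

lemma complete_N: "ext_complete (B \<union> C) d"
  unfolding ext_complete_def
proof (intro allI impI, elim conjE)
  fix s assume sN: "\<forall>n. s n \<in> B \<union> C" and cau: "ext_cauchy d s"
  show "\<exists>x\<in>B \<union> C. ext_converges_to d s x"
  proof (cases "\<forall>N. \<exists>n\<ge>N. s n \<in> B")
    case True
    then show ?thesis using gen_freq[OF em_N _ forest_complete[OF fB] _ cau] sN by blast
  next
    case False
    then obtain N where N: "\<forall>n\<ge>N. s n \<notin> B" by blast
    have "\<exists>n\<ge>N'. s n \<in> C" for N'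
      using N sN by (metis UnE max.cobounded1 max.cobounded2)
    then show ?thesis using gen_freq[OF em_N _ forest_complete[OF fC] _ cau] sN by blast
  qed
qed

lemma convex_C:
  assumes z: "z \<in> C" and T: "T = {y\<in>C. d z y < \<infinity>}"
    and p: "p \<in> B \<inter> C" "p \<in> T" and q: "q \<in> B \<inter> C" "q \<in> T" and arc: "arc_between T d p q G"
  shows "G \<subseteq> B \<inter> C"
proof -
  define TA where "TA = {y\<in>B \<inter> C. d p y < \<infinity>}"
  have trA: "r_tree TA d" unfolding TA_def using forest_tree[OF fA p(1)] .
  have trC: "r_tree T d" unfolding T using forest_tree[OF fC z] .
  have pC: "p \<in> C" "q \<in> C" using p q by auto
  have dzp: "d z p < \<infinity>" "d z q < \<infinity>" using p q T by auto
  have "d p z < \<infinity>" using fin_sym[OF emC z pC(1) dzp(1)] .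
  then have "d p q < \<infinity>" using fin_tri[OF emC pC(1) z pC(2)] dzp(2) by blast
  then have qA: "q \<in> TA" unfolding TA_def using q by blast
  have pA: "p \<in> TA" unfolding TA_def using p em_zero[OF emA p(1)] by simp
  obtain S where S: "arc_between TA d p q S" using tree_exists[OF trA pA qA] by blast
  have "TA \<subseteq> T"
  proof
    fix w assume w: "w \<in> TA"
    then have "w \<in> C" "d p w < \<infinity>" unfolding TA_def by auto
    then have "d z w < \<infinity>" using fin_tri[OF emC z pC(1)] dzp(1) by blast
    then show "w \<in> T" using \<open>w \<in> C\<close> T by blast
  qed
  then have "arc_between T d p q S" using arc_mono[OF S] arc_ends[OF S] by blast
  then have "G = S" using tree_unique[OF trC p(2) q(2) arc] by simp
  then show ?thesis using arc_ends[OF S] unfolding TA_def by blast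
qed

lemma arc_stays_B:
  assumes pc: "path_cont_on {a..b} d g" and inj: "inj_on g {a..b}" and ab: "a \<le> b"
    and gN: "g ` {a..b} \<subseteq> B \<union> C" and fin: "\<And>t. t \<in> {a..b} \<Longrightarrow> d (g a) (g t) < \<infinity>"
    and ga: "g a \<in> B" and gb: "g b \<in> B"
  shows "g ` {a..b} \<subseteq> B"
proof (rule ccontr)
  assume "\<not> g ` {a..b} \<subseteq> B"
  then obtain \<tau> where \<tau>: "\<tau> \<in> {a..b}" "g \<tau> \<notin> B" by blast
  define SB where "SB = {t\<in>{a..b}. g t \<in> B}"
  have clB: "closed SB" unfolding SB_def by (rule preimage_closed[OF pc em_N gN sepB])
  define SC where "SC = {t\<in>{a..b}. g t \<in> C}"
  have clC: "closed SC" unfolding SC_def by (rule preimage_closed[OF pc em_N gN sepC])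
  define L where "L = SB \<inter> {..\<tau>}"
  have aL: "a \<in> L" unfolding L_def SB_def using ga ab \<tau> by auto
  have clL: "closed L" unfolding L_def using clB by (simp add: closed_Int)
  have bL: "bdd_above L" unfolding L_def by (rule bdd_aboveI[of _ \<tau>]) auto
  define s where "s = Sup L"
  have sL: "s \<in> L" unfolding s_def using closed_contains_Sup[OF _ bL clL] aL by blast
  then have s: "a \<le> s" "s \<le> \<tau>" "g s \<in> B" unfolding L_def SB_def by auto
  have "s \<noteq> \<tau>" using s(3) \<tau>(2) by blast
  then have st: "s < \<tau>" using s(2) by simp
  define U where "U = SB \<inter> {\<tau>..}"
  have bU: "b \<in> U" unfolding U_def SB_def using gb ab \<tau> by auto
  have clU: "closed U" unfolding U_def using clB by (simp add: closed_Int)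
  have bdU: "bdd_below U" unfolding U_def by (rule bdd_belowI[of _ \<tau>]) auto
  define t' where "t' = Inf U"
  have tU: "t' \<in> U" unfolding t'_def using closed_contains_Inf[OF _ bdU clU] bU by blast
  then have t': "\<tau> \<le> t'" "t' \<le> b" "g t' \<in> B" unfolding U_def SB_def by auto
  have "t' \<noteq> \<tau>" using t'(3) \<tau>(2) by blast
  then have tt: "\<tau> < t'" using t'(1) by simp
  have mid: "t \<in> SC" if "s < t" "t < t'" for t
  proof -
    have tab: "t \<in> {a..b}" using that s(1) t'(2) by auto
    have "g t \<notin> B"
    proof
      assume gt: "g t \<in> B"
      show False
      proof (cases "t \<le> \<tau>")
        case True
        then have "t \<in> L" unfolding L_def SB_def using gt tab by auto
        then have "t \<le> s" unfolding s_def using bL by (rule cSup_upper)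
        then show False using that by simp
      next
        case False
        then have "t \<in> U" unfolding U_def SB_def using gt tab by auto
        then have "t' \<le> t" unfolding t'_def using bdU by (rule cInf_lower)
        then show False using that by simp
      qed
    qed
    moreover have "g t \<in> B \<union> C" using gN tab by blast
    ultimately show ?thesis unfolding SC_def using tab by blast
  qed
  have "{s<..<t'} \<subseteq> SC" using mid by auto
  then have "closure {s<..<t'} \<subseteq> SC" using clC by (rule closure_minimal)
  then have sub: "{s..t'} \<subseteq> SC" using st tt by simp
  define z where "z = g s"
  define T where "T = {y\<in>C. d z y < \<infinity>}"
  have sab: "s \<in> {a..b}" using s(1) st tt t'(2) by auto
  have zN: "z \<in> B \<union> C" using gN sab unfolding z_def by blast
  have gaN: "g a \<in> B \<union> C" using ga by blast
  have dza: "d z (g a) < \<infinity>" unfolding z_def using fin_sym[OF em_N gaN _ fin[OF sab]] gN sab by blast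
  have gT: "g ` {s..t'} \<subseteq> T"
  proof
    fix w assume "w \<in> g ` {s..t'}"
    then obtain t where t: "t \<in> {s..t'}" "w = g t" by blast
    then have tab: "t \<in> {a..b}" using s(1) t'(2) by auto
    have "w \<in> C" using sub t unfolding SC_def by auto
    moreover have "d z w < \<infinity>"
      using fin_tri[OF em_N zN gaN _ dza fin[OF tab]] gN tab t(2) by blast
    ultimately show "w \<in> T" unfolding T_def by blast
  qed
  have arc: "arc_between T d (g s) (g t') (g ` {s..t'})"
    by (rule arc_sub[OF pc inj s(1)]) (use st tt t'(2) gT in auto)
  have sI: "s \<in> {s..t'}" "t' \<in> {s..t'}" using st tt by auto
  have gsC: "g s \<in> C" "g t' \<in> C" using sub sI unfolding SC_def by blast+
  have zC: "z \<in> C" using gsC unfolding z_def by simp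
  have "g s \<in> T" "g t' \<in> T" using gT sI by blast+
  moreover have "g s \<in> B \<inter> C" "g t' \<in> B \<inter> C" using s(3) t'(3) gsC by auto
  ultimately have "g ` {s..t'} \<subseteq> B \<inter> C" using convex_C[OF zC T_def _ _ _ _ arc] by blast
  moreover have "\<tau> \<in> {s..t'}" using st tt by auto
  ultimately show False using \<tau>(2) by blast
qed

end


context glue begin

lemma T_fin:
  assumes x0: "x0 \<in> B \<union> C" and T: "T = {w\<in>B \<union> C. d x0 w < \<infinity>}" and u: "u \<in> T" and v: "v \<in> T"
  shows "d u v < \<infinity>"
proof -
  have uN: "u \<in> B \<union> C" "d x0 u < \<infinity>" using u T by auto
  have vN: "v \<in> B \<union> C" "d x0 v < \<infinity>" using v T by auto
  have "d u x0 < \<infinity>" using fin_sym[OF em_N x0 uN(1) uN(2)] .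
  then show ?thesis using fin_tri[OF em_N uN(1) x0 vN(1)] vN(2) by blast
qed

lemma T_in:
  assumes x0: "x0 \<in> B \<union> C" and T: "T = {w\<in>B \<union> C. d x0 w < \<infinity>}" and u: "u \<in> T"
    and w: "w \<in> B \<union> C" and uw: "d u w < \<infinity>"
  shows "w \<in> T"
proof -
  have uN: "u \<in> B \<union> C" "d x0 u < \<infinity>" using u T by auto
  have "d x0 w < \<infinity>" using fin_tri[OF em_N x0 uN(1) w uN(2) uw] .
  then show ?thesis using T w by blast
qed

lemma caseBB:
  assumes x0: "x0 \<in> B \<union> C" and T: "T = {w\<in>B \<union> C. d x0 w < \<infinity>}"
    and x: "x \<in> T" "x \<in> B" and y: "y \<in> T" "y \<in> B"
  shows "\<exists>G0 L \<phi>. (\<forall>G. arc_between T d x y G \<longleftrightarrow> G = G0) \<and> 0 \<le> L \<and> \<phi> ` {0..L} = G0 \<and> iso_on {0..L} d \<phi>"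
proof -
  define TB where "TB = {w\<in>B. d x w < \<infinity>}"
  have trB: "r_tree TB d" unfolding TB_def using forest_tree[OF fB x(2)] .
  have xTB: "x \<in> TB" unfolding TB_def using x(2) em_zero[OF emB x(2)] by simp
  have yTB: "y \<in> TB" unfolding TB_def using y(2) T_fin[OF x0 T x(1) y(1)] by simp
  obtain G0 where G0: "arc_between TB d x y G0" using tree_exists[OF trB xTB yTB] by blast
  obtain \<psi> D where P: "0 \<le> D" "\<psi> ` {0..D} = G0" "iso_on {0..D} d \<psi>"
    using tree_geo[OF trB xTB yTB G0] by blast
  have TBT: "TB \<subseteq> T"
  proof
    fix w assume "w \<in> TB"
    then have "w \<in> B \<union> C" "d x w < \<infinity>" unfolding TB_def by auto
    then show "w \<in> T" using T_in[OF x0 T x(1)] by blast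
  qed
  have arcT: "arc_between T d x y G0" using arc_mono[OF G0] arc_ends[OF G0] TBT by blast
  have all: "arc_between T d x y G \<longleftrightarrow> G = G0" for G
  proof
    assume H: "arc_between T d x y G"
    then obtain a b g where g: "a \<le> b" "g ` {a..b} = G" "G \<subseteq> T" "inj_on g {a..b}"
      "path_cont_on {a..b} d g" "g a = x" "g b = y"
      unfolding arc_between_def by blast
    have TN: "T \<subseteq> B \<union> C" using T by blast
    have fin: "d (g a) (g t) < \<infinity>" if "t \<in> {a..b}" for t
      using T_fin[OF x0 T] g that x(1) by blast
    have GB: "g ` {a..b} \<subseteq> B"
      by (rule arc_stays_B[OF g(5) g(4) g(1) _ fin]) (use g TN x y in auto)
    have "G \<subseteq> TB"
    proof
      fix w assume w: "w \<in> G"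
      then have "w \<in> B" using GB g(2) by blast
      moreover have "d x w < \<infinity>" using T_fin[OF x0 T x(1)] w g(3) by blast
      ultimately show "w \<in> TB" unfolding TB_def by blast
    qed
    then have "arc_between TB d x y G" using arc_mono[OF H] by blast
    then show "G = G0" using tree_unique[OF trB xTB yTB _ G0] by blast
  next
    assume "G = G0" then show "arc_between T d x y G" using arcT by simp
  qed
  show ?thesis using all P by blast
qed


lemma caseCB:
  assumes x0: "x0 \<in> B \<union> C" and T: "T = {w\<in>B \<union> C. d x0 w < \<infinity>}"
    and x: "x \<in> T" "x \<in> C" "x \<notin> B" and y: "y \<in> T" "y \<in> B" "y \<notin> C"
  shows "\<exists>G0 L \<phi>. (\<forall>G. arc_between T d x y G \<longleftrightarrow> G = G0) \<and> 0 \<le> L \<and> \<phi> ` {0..L} = G0 \<and> iso_on {0..L} d \<phi>"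
proof -
  define TC where "TC = {w\<in>C. d x w < \<infinity>}"
  have trC: "r_tree TC d" unfolding TC_def using forest_tree[OF fC x(2)] .
  have emTC: "ext_metric TC d" using trC by (rule tree_em)
  have TN: "T \<subseteq> B \<union> C" using T by blast
  have xN: "x \<in> B \<union> C" "y \<in> B \<union> C" using x y by auto
  have xTC: "x \<in> TC" unfolding TC_def using x(2) em_zero[OF emC x(2)] by simp
  have TCT: "TC \<subseteq> T"
  proof
    fix w assume "w \<in> TC"
    then have "w \<in> B \<union> C" "d x w < \<infinity>" unfolding TC_def by auto
    then show "w \<in> T" using T_in[OF x0 T x(1)] by blast
  qed
  have TCC: "TC \<subseteq> C" unfolding TC_def by blast
  define P where "P p \<longleftrightarrow> p \<in> B \<inter> C \<and> p \<in> TC \<and> (\<forall>G. arc_between TC d x p G \<longrightarrow> G \<inter> (B \<inter> C) \<subseteq> {p})" for p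
  have exP: "\<exists>p. P p"
  proof -
    have "(INF a\<in>B \<inter> C. d x a + d a y) < top"
      using cross'[OF x(2) y(2)] T_fin[OF x0 T x(1) y(1)] by (simp add: infinity_ennreal_def)
    then obtain a where a: "a \<in> B \<inter> C" "d x a + d a y < top" by (subst (asm) INF_less_iff) blast
    have "d x a \<le> d x a + d a y" by simp
    then have "d x a < \<infinity>" using a(2) by (simp add: infinity_ennreal_def le_less_trans)
    then have aTC: "a \<in> TC" unfolding TC_def using a(1) by blast
    obtain Ga where Ga: "arc_between TC d x a Ga" using tree_exists[OF trC xTC aTC] by blast
    obtain \<psi> D where P: "0 \<le> D" "\<psi> 0 = x" "\<psi> D = a" "\<psi> ` {0..D} = Ga" "iso_on {0..D} d \<psi>"
      using tree_geo[OF trC xTC aTC Ga] by blast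
    have GaTC: "Ga \<subseteq> TC" using arc_ends[OF Ga] by blast
    have pc: "path_cont_on {0..D} d \<psi>" using lip_path_cont[OF iso_lip[OF P(5)]] .
    have inj: "inj_on \<psi> {0..D}" using iso_inj[OF emTC _ P(5)] P(4) GaTC by blast
    define S where "S = {t\<in>{0..D}. \<psi> t \<in> B \<inter> C}"
    have clS: "closed S" unfolding S_def
      by (rule preimage_closed[OF pc em_N _ sepA]) (use P(4) GaTC TCT TN in blast)
    have DS: "D \<in> S" unfolding S_def using P a by auto
    have bS: "bdd_below S" unfolding S_def by (rule bdd_belowI[of _ 0]) auto
    define t0 where "t0 = Inf S"
    have t0S: "t0 \<in> S" unfolding t0_def using closed_contains_Inf[OF _ bS clS] DS by blast
    then have t0: "0 \<le> t0" "t0 \<le> D" "\<psi> t0 \<in> B \<inter> C" unfolding S_def by auto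
    have pTC: "\<psi> t0 \<in> TC" using t0 P(4) GaTC by auto
    have sub0: "\<psi> ` {0..t0} \<subseteq> TC" using P(4) GaTC t0 by auto
    have arc0: "arc_between TC d x (\<psi> t0) (\<psi> ` {0..t0})"
      using arc_sub[OF pc inj order_refl t0(1) t0(2) sub0] P(2) by simp
    have "P (\<psi> t0)"
      unfolding P_def
    proof (intro conjI allI impI)
      show "\<psi> t0 \<in> B \<inter> C" "\<psi> t0 \<in> TC" using t0 pTC by auto
      fix G assume "arc_between TC d x (\<psi> t0) G"
      then have G: "G = \<psi> ` {0..t0}" using tree_unique[OF trC xTC pTC _ arc0] by blast
      show "G \<inter> (B \<inter> C) \<subseteq> {\<psi> t0}"
      proof
        fix w assume w: "w \<in> G \<inter> (B \<inter> C)"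
        then obtain t where t: "t \<in> {0..t0}" "w = \<psi> t" using G by blast
        then have "t \<in> S" unfolding S_def using w t0 by auto
        then have "t0 \<le> t" unfolding t0_def using bS by (rule cInf_lower)
        then show "w \<in> {\<psi> t0}" using t by auto
      qed
    qed
    then show ?thesis by blast
  qed
  have uniq: "p = p'" if Pp: "P p" and Pp': "P p'" for p p'
  proof (rule ccontr)
    assume ne: "p \<noteq> p'"
    have pp: "p \<in> B \<inter> C" "p \<in> TC" "p' \<in> B \<inter> C" "p' \<in> TC" using Pp Pp' unfolding P_def by auto
    obtain Gp where Gp: "arc_between TC d x p Gp" using tree_exists[OF trC xTC pp(2)] by blast
    obtain Sg where Sg: "arc_between TC d p p' Sg" using tree_exists[OF trC pp(2) pp(4)] by blast
    have SgA: "Sg \<subseteq> B \<inter> C" using convex_C[OF x(2) TC_def pp(1,2) pp(3,4) Sg] .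
    have "Gp \<inter> (B \<inter> C) \<subseteq> {p}" using Pp Gp unfolding P_def by blast
    then have "Gp \<inter> Sg \<subseteq> {p}" using SgA by blast
    then have "arc_between TC d x p' (Gp \<union> Sg)" using tree_concat(1)[OF trC xTC pp(2) pp(4) Gp Sg] by blast
    then have "(Gp \<union> Sg) \<inter> (B \<inter> C) \<subseteq> {p'}" using Pp' unfolding P_def by blast
    moreover have "p \<in> Gp" using arc_ends[OF Gp] by blast
    ultimately show False using pp(1) ne by blast
  qed
  obtain p where Pp: "P p" using exP by blast
  have pp: "p \<in> B \<inter> C" "p \<in> TC" using Pp unfolding P_def by auto
  have pT: "p \<in> T" using pp TCT by blast
  obtain G1 where G1: "arc_between TC d x p G1" using tree_exists[OF trC xTC pp(2)] by blast
  obtain \<psi>1 D1 where P1: "0 \<le> D1" "\<psi>1 0 = x" "\<psi>1 D1 = p" "\<psi>1 ` {0..D1} = G1" "iso_on {0..D1} d \<psi>1"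
    using tree_geo[OF trC xTC pp(2) G1] by blast
  have G1A: "G1 \<inter> (B \<inter> C) \<subseteq> {p}" using Pp G1 unfolding P_def by blast
  have G1TC: "G1 \<subseteq> TC" using arc_ends[OF G1] by blast
  define TB where "TB = {w\<in>B. d p w < \<infinity>}"
  have pB: "p \<in> B" using pp by blast
  have trB: "r_tree TB d" unfolding TB_def using forest_tree[OF fB pB] .
  have pTB: "p \<in> TB" unfolding TB_def using pB em_zero[OF emB pB] by simp
  have yTB: "y \<in> TB" unfolding TB_def using y(2) T_fin[OF x0 T pT y(1)] by simp
  have TBT: "TB \<subseteq> T"
  proof
    fix w assume "w \<in> TB"
    then have "w \<in> B \<union> C" "d p w < \<infinity>" unfolding TB_def by auto
    then show "w \<in> T" using T_in[OF x0 T pT] by blast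
  qed
  have TBB: "TB \<subseteq> B" unfolding TB_def by blast
  obtain G2 where G2: "arc_between TB d p y G2" using tree_exists[OF trB pTB yTB] by blast
  obtain \<psi>2 D2 where P2: "0 \<le> D2" "\<psi>2 0 = p" "\<psi>2 D2 = y" "\<psi>2 ` {0..D2} = G2" "iso_on {0..D2} d \<psi>2"
    using tree_geo[OF trB pTB yTB G2] by blast
  have G2TB: "G2 \<subseteq> TB" using arc_ends[OF G2] by blast
  have int: "G1 \<inter> G2 \<subseteq> {p}" using G1A G1TC G2TB TCC TBB by blast
  have pc1: "path_cont_on {0..D1} d \<psi>1" using lip_path_cont[OF iso_lip[OF P1(5)]] .
  have inj1: "inj_on \<psi>1 {0..D1}" using iso_inj[OF emTC _ P1(5)] P1(4) G1TC by blast
  have crossd: "d (\<psi>1 s) (\<psi>2 t) = ennreal (D1 - s + t)" if st: "s \<in> {0..D1}" "t \<in> {0..D2}" for s t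
  proof -
    define u where "u = \<psi>1 s"
    define v where "v = \<psi>2 t"
    have uG: "u \<in> G1" unfolding u_def using P1(4) st(1) by blast
    have vG: "v \<in> G2" unfolding v_def using P2(4) st(2) by blast
    have uTC: "u \<in> TC" and uC: "u \<in> C" using uG G1TC TCC by auto
    have vB: "v \<in> B" using vG G2TB TBB by auto
    have du: "d u p = ennreal (D1 - s)"
    proof -
      have "d (\<psi>1 s) (\<psi>1 D1) = ennreal \<bar>s - D1\<bar>" using P1(5) st(1) P1(1) unfolding iso_on_def by simp
      then show ?thesis using st(1) P1(3) unfolding u_def by simp
    qed
    have dv: "d p v = ennreal t"
    proof -
      have "d (\<psi>2 0) (\<psi>2 t) = ennreal \<bar>0 - t\<bar>" using P2(5) st(2) P2(1) unfolding iso_on_def by simp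
      then show ?thesis using st(2) P2(2) unfolding v_def by simp
    qed
    have uN: "u \<in> B \<union> C" and vN: "v \<in> B \<union> C" and pN: "p \<in> B \<union> C" using uC vB pB by auto
    have le: "d u v \<le> d u p + d p v" using em_tri[OF em_N uN pN vN] .
    have ge: "d u p + d p v \<le> d u v"
    proof -
      have "d u p + d p v \<le> d u a + d a v" if a: "a \<in> B \<inter> C" for a
      proof (cases "d u a < \<infinity>")
        case False
        then have "d u a = top" by (metis infinity_ennreal_def less_top)
        then show ?thesis by simp
      next
        case True
        have aC: "a \<in> C" using a by blast
        have "d x u < \<infinity>" using uTC unfolding TC_def by blast
        then have "d x a < \<infinity>" using fin_tri[OF emC x(2) uC aC] True by blast
        then have aTC: "a \<in> TC" unfolding TC_def using aC by blast
        have subu: "\<psi>1 ` {s..D1} \<subseteq> TC" using P1(4) G1TC st(1) by auto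
        have Gu: "arc_between TC d u p (\<psi>1 ` {s..D1})"
          using arc_sub[OF pc1 inj1 _ _ order_refl subu] st(1) P1(3) unfolding u_def by auto
        obtain Sa where Sa: "arc_between TC d p a Sa" using tree_exists[OF trC pp(2) aTC] by blast
        have SaA: "Sa \<subseteq> B \<inter> C" using convex_C[OF x(2) TC_def pp(1,2) a aTC Sa] .
        have "\<psi>1 ` {s..D1} \<subseteq> G1" using P1(4) st(1) by auto
        then have "\<psi>1 ` {s..D1} \<inter> Sa \<subseteq> {p}" using G1A SaA by blast
        then have dua: "d u a = d u p + d p a" using tree_concat(2)[OF trC uTC pp(2) aTC Gu Sa] by blast
        have "d p v \<le> d p a + d a v" using em_tri[OF emB pB _ vB, of a] a by blast
        then have "d u p + d p v \<le> d u p + (d p a + d a v)" by (rule add_left_mono)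
        also have "\<dots> = d u a + d a v" using dua by (simp add: add.assoc)
        finally show ?thesis .
      qed
      then have "d u p + d p v \<le> (INF a\<in>B \<inter> C. d u a + d a v)" by (rule INF_greatest)
      also have "\<dots> = d u v" using cross'[OF uC vB] by simp
      finally show ?thesis .
    qed
    have "d u v = d u p + d p v" using le ge by (rule antisym)
    also have "\<dots> = ennreal (D1 - s + t)" using du dv st by (simp add: ennreal_plus)
    finally show ?thesis unfolding u_def v_def .
  qed
  have img1: "\<psi>1 ` {0..D1} \<subseteq> B \<union> C" and img2: "\<psi>2 ` {0..D2} \<subseteq> B \<union> C"
    using P1(4) P2(4) G1TC G2TB TCC TBB by auto
  have isoc: "iso_on {0..D1+D2} d (cat D1 \<psi>1 \<psi>2)"
    by (rule cat_iso[OF em_N img1 img2 P1(1) P2(1) P1(5) P2(5) crossd])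
  have injc: "inj_on (cat D1 \<psi>1 \<psi>2) {0..D1+D2}"
    by (rule cat_inj[OF em_N img1 img2 P1(1) P2(1) P1(5) P2(5)]) (use int P1(4) P2(2,4) in auto)
  have imgc: "cat D1 \<psi>1 \<psi>2 ` {0..D1+D2} = G1 \<union> G2"
    using cat_image[of D1 D2 \<psi>1 \<psi>2] P1 P2 by auto
  have GT: "G1 \<union> G2 \<subseteq> T" using G1TC G2TB TCT TBT by blast
  have arcT: "arc_between T d x y (G1 \<union> G2)"
  proof -
    have "arc_between T d (cat D1 \<psi>1 \<psi>2 0) (cat D1 \<psi>1 \<psi>2 (D1+D2)) (cat D1 \<psi>1 \<psi>2 ` {0..D1+D2})"
      by (rule lip_arc[OF _ iso_lip[OF isoc] injc]) (use P1(1) P2(1) imgc GT in auto)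
    then show ?thesis using imgc cat_start[of D1 \<psi>1 \<psi>2] cat_end[of D1 D2 \<psi>1 \<psi>2] P1 P2 by auto
  qed
  have all: "arc_between T d x y G \<longleftrightarrow> G = G1 \<union> G2" for G
  proof
    assume H: "arc_between T d x y G"
    then obtain a b g where g: "a \<le> b" "g ` {a..b} = G" "G \<subseteq> T" "inj_on g {a..b}"
      "path_cont_on {a..b} d g" "g a = x" "g b = y"
      unfolding arc_between_def by blast
    have gN: "g ` {a..b} \<subseteq> B \<union> C" using g(2,3) TN by blast
    have gT: "g t \<in> T" if "t \<in> {a..b}" for t using g(2,3) that by blast
    define SB where "SB = {t\<in>{a..b}. g t \<in> B}"
    have clB: "closed SB" unfolding SB_def by (rule preimage_closed[OF g(5) em_N gN sepB])
    define SC where "SC = {t\<in>{a..b}. g t \<in> C}"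
    have clC: "closed SC" unfolding SC_def by (rule preimage_closed[OF g(5) em_N gN sepC])
    have bSB: "b \<in> SB" unfolding SB_def using g(1,7) y(2) by auto
    have bdS: "bdd_below SB" unfolding SB_def by (rule bdd_belowI[of _ a]) auto
    define s where "s = Inf SB"
    have sS: "s \<in> SB" unfolding s_def using closed_contains_Inf[OF _ bdS clB] bSB by blast
    then have s: "a \<le> s" "s \<le> b" "g s \<in> B" unfolding SB_def by auto
    have "s \<noteq> a" using s(3) g(6) x(3) by auto
    then have as: "a < s" using s(1) by simp
    have before: "g t \<notin> B" if "a \<le> t" "t < s" for t
    proof
      assume "g t \<in> B"
      then have "t \<in> SB" unfolding SB_def using that s(2) by auto
      then have "s \<le> t" unfolding s_def using bdS by (rule cInf_lower)
      then show False using that by simp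
    qed
    have "{a..<s} \<subseteq> SC"
    proof
      fix t assume t: "t \<in> {a..<s}"
      then have tab: "t \<in> {a..b}" using s(2) by auto
      have "g t \<in> B \<union> C" using gN tab by blast
      then have "g t \<in> C" using before t by auto
      then show "t \<in> SC" unfolding SC_def using tab by blast
    qed
    then have "closure {a..<s} \<subseteq> SC" using clC by (rule closure_minimal)
    then have subC: "{a..s} \<subseteq> SC" using as by simp
    have gsA: "g s \<in> B \<inter> C" using subC s(1,3) unfolding SC_def by auto
    have sab: "s \<in> {a..b}" using s by auto
    have part2: "g ` {s..b} \<subseteq> B"
    proof (rule arc_stays_B)
      show "path_cont_on {s..b} d g" using path_cont_subset[OF g(5)] s(1) by auto
      show "inj_on g {s..b}" using inj_on_subset[OF g(4)] s(1) by auto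
      show "s \<le> b" using s(2) .
      have "{s..b} \<subseteq> {a..b}" using s(1) by auto
      then show "g ` {s..b} \<subseteq> B \<union> C" using gN by (meson image_mono order_trans)
      show "d (g s) (g t) < \<infinity>" if "t \<in> {s..b}" for t
        using T_fin[OF x0 T gT[OF sab] gT] that s(1) by auto
      show "g s \<in> B" "g b \<in> B" using s(3) g(7) y(2) by auto
    qed
    have part1: "g ` {a..s} \<subseteq> TC"
    proof
      fix w assume "w \<in> g ` {a..s}"
      then obtain t where t: "t \<in> {a..s}" "w = g t" by blast
      then have "w \<in> C" using subC unfolding SC_def by auto
      moreover have "d x w < \<infinity>" using T_fin[OF x0 T x(1) gT] t s(2) by auto
      ultimately show "w \<in> TC" unfolding TC_def by blast
    qed
    have arc1: "arc_between TC d x (g s) (g ` {a..s})"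
      using arc_sub[OF g(5) g(4) order_refl s(1) s(2) part1] g(6) by simp
    have gsTC: "g s \<in> TC" using part1 s(1) by auto
    have "P (g s)" unfolding P_def
    proof (intro conjI allI impI)
      show "g s \<in> B \<inter> C" "g s \<in> TC" using gsA gsTC by auto
      fix G' assume "arc_between TC d x (g s) G'"
      then have G': "G' = g ` {a..s}" using tree_unique[OF trC xTC gsTC _ arc1] by blast
      show "G' \<inter> (B \<inter> C) \<subseteq> {g s}"
      proof
        fix w assume w: "w \<in> G' \<inter> (B \<inter> C)"
        then obtain t where t: "t \<in> {a..s}" "w = g t" using G' by blast
        have "\<not> t < s" using before[of t] t w by auto
        then have "t = s" using t by auto
        then show "w \<in> {g s}" using t by simp
      qed
    qed
    then have gsp: "g s = p" using uniq Pp by blast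
    have e1: "g ` {a..s} = G1" using tree_unique[OF trC xTC pp(2) _ G1] arc1 gsp by simp
    have part2': "g ` {s..b} \<subseteq> TB"
    proof
      fix w assume "w \<in> g ` {s..b}"
      then obtain t where t: "t \<in> {s..b}" "w = g t" by blast
      then have "w \<in> B" using part2 by auto
      moreover have "d p w < \<infinity>" using T_fin[OF x0 T pT gT] t s(1) by auto
      ultimately show "w \<in> TB" unfolding TB_def by blast
    qed
    have arc2: "arc_between TB d (g s) (g b) (g ` {s..b})"
      using arc_sub[OF g(5) g(4) s(1) s(2) order_refl part2'] .
    have e2: "g ` {s..b} = G2" using tree_unique[OF trB pTB yTB _ G2] arc2 gsp g(7) by simp
    have "{a..b} = {a..s} \<union> {s..b}" using s(1,2) by auto
    then have "g ` {a..b} = g ` {a..s} \<union> g ` {s..b}" by (simp only: image_Un)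
    then show "G = G1 \<union> G2" using g(2) e1 e2 by simp
  next
    assume "G = G1 \<union> G2" then show "arc_between T d x y G" using arcT by simp
  qed
  have "0 \<le> D1 + D2" using P1(1) P2(1) by simp
  then show ?thesis using all imgc isoc by blast
qed

end


context glue begin

lemma good:
  assumes x0: "x0 \<in> B \<union> C" and T: "T = {w\<in>B \<union> C. d x0 w < \<infinity>}" and x: "x \<in> T" and y: "y \<in> T"
  shows "\<exists>G0 L \<phi>. (\<forall>G. arc_between T d x y G \<longleftrightarrow> G = G0) \<and> 0 \<le> L \<and> \<phi> ` {0..L} = G0 \<and> iso_on {0..L} d \<phi>"
proof -
  interpret sw: glue C B d by (rule swap)
  have x0': "x0 \<in> C \<union> B" using x0 by blast
  have T': "T = {w\<in>C \<union> B. d x0 w < \<infinity>}" using T by (simp add: Un_commute)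
  have xN: "x \<in> B \<union> C" "y \<in> B \<union> C" using x y T by auto
  consider "x \<in> B" "y \<in> B" | "x \<in> C" "y \<in> C" | "x \<in> C" "x \<notin> B" "y \<in> B" "y \<notin> C"
    | "x \<in> B" "x \<notin> C" "y \<in> C" "y \<notin> B" using xN by blast
  then show ?thesis
  proof cases
    case 1 then show ?thesis using caseBB[OF x0 T x _ y] by blast
  next
    case 2 then show ?thesis using sw.caseBB[OF x0' T' x _ y] by blast
  next
    case 3 then show ?thesis using caseCB[OF x0 T x _ _ y] by blast
  next
    case 4 then show ?thesis using sw.caseCB[OF x0' T' x _ _ y] by blast
  qed
qed

lemma tree_N:
  assumes x0: "x0 \<in> B \<union> C"
  shows "r_tree {w\<in>B \<union> C. d x0 w < \<infinity>} d"
proof -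
  define T where "T = {w\<in>B \<union> C. d x0 w < \<infinity>}"
  have TN: "T \<subseteq> B \<union> C" unfolding T_def by blast
  have em: "ext_metric T d" using ext_metric_subset[OF em_N TN] .
  have fin: "\<forall>x\<in>T. \<forall>y\<in>T. d x y < \<infinity>" using T_fin[OF x0 T_def] by blast
  have cpl: "ext_complete T d" unfolding ext_complete_def
  proof (intro allI impI, elim conjE)
    fix s assume sT: "\<forall>n. s n \<in> T" and cau: "ext_cauchy d s"
    then obtain z where z: "z \<in> B \<union> C" "ext_converges_to d s z"
      using complete_N TN unfolding ext_complete_def by blast
    obtain N where "d (s N) z < ennreal 1" using z(2) unfolding ext_converges_to_def
      by (meson zero_less_one order_refl)
    then have "d (s N) z < \<infinity>" by (metis ennreal_less_top infinity_ennreal_def order.strict_trans)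
    then have "z \<in> T" using T_in[OF x0 T_def sT[rule_format, of N] z(1)] by blast
    then show "\<exists>x\<in>T. ext_converges_to d s x" using z(2) by blast
  qed
  have g: "\<exists>G0 L \<phi>. (\<forall>G. arc_between T d x y G \<longleftrightarrow> G = G0) \<and> 0 \<le> L \<and> \<phi> ` {0..L} = G0 \<and> iso_on {0..L} d \<phi>"
    if "x \<in> T" "y \<in> T" for x y
    using good[OF x0 T_def that] .
  have eu: "\<forall>x\<in>T. \<forall>y\<in>T. \<exists>!A. arc_between T d x y A"
  proof (intro ballI)
    fix x y assume "x \<in> T" "y \<in> T"
    then obtain G0 where "\<forall>G. arc_between T d x y G \<longleftrightarrow> G = G0" using g by blast
    then show "\<exists>!A. arc_between T d x y A" by blast
  qed
  have isoc: "\<forall>x\<in>T. \<forall>y\<in>T. \<forall>A. arc_between T d x y A \<longrightarrow>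
        (\<exists>L::real. \<exists>\<phi>. L \<ge> 0 \<and> \<phi> ` {0..L} = A \<and>
           (\<forall>s\<in>{0..L}. \<forall>t\<in>{0..L}. d (\<phi> s) (\<phi> t) = ennreal \<bar>s - t\<bar>))"
  proof (intro ballI allI impI)
    fix x y A assume xy: "x \<in> T" "y \<in> T" and A: "arc_between T d x y A"
    obtain G0 L \<phi> where H: "\<forall>G. arc_between T d x y G \<longleftrightarrow> G = G0" "0 \<le> L" "\<phi> ` {0..L} = G0" "iso_on {0..L} d \<phi>"
      using g[OF xy] by blast
    have "A = G0" using H(1) A by blast
    then show "\<exists>L::real. \<exists>\<phi>. L \<ge> 0 \<and> \<phi> ` {0..L} = A \<and>
           (\<forall>s\<in>{0..L}. \<forall>t\<in>{0..L}. d (\<phi> s) (\<phi> t) = ennreal \<bar>s - t\<bar>)"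
      using H(2-4) unfolding iso_on_def by blast
  qed
  show ?thesis unfolding T_def[symmetric] r_tree_def using em fin cpl eu isoc by (intro conjI)
qed

lemma forest_N: "r_forest (B \<union> C) d"
  unfolding r_forest_def using em_N complete_N tree_N by blast

end


definition iso_pair :: "'a set \<Rightarrow> 'b set \<Rightarrow> ('a \<Rightarrow> 'b) \<Rightarrow> ('b \<Rightarrow> 'a) \<Rightarrow>
    ('a \<Rightarrow> 'a \<Rightarrow> ennreal) \<Rightarrow> ('b \<Rightarrow> 'b \<Rightarrow> ennreal) \<Rightarrow> bool" where
  "iso_pair S S' h h' d d' \<longleftrightarrow> (\<forall>x\<in>S. h x \<in> S') \<and> (\<forall>y\<in>S'. h' y \<in> S) \<and> (\<forall>x\<in>S. h' (h x) = x) \<and>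
     (\<forall>y\<in>S'. h (h' y) = y) \<and> (\<forall>x\<in>S. \<forall>y\<in>S. d' (h x) (h y) = d x y)"

lemma ip_h: "iso_pair S S' h h' d d' \<Longrightarrow> x \<in> S \<Longrightarrow> h x \<in> S'" unfolding iso_pair_def by blast
lemma ip_h': "iso_pair S S' h h' d d' \<Longrightarrow> y \<in> S' \<Longrightarrow> h' y \<in> S" unfolding iso_pair_def by blast
lemma ip_hh: "iso_pair S S' h h' d d' \<Longrightarrow> x \<in> S \<Longrightarrow> h' (h x) = x" unfolding iso_pair_def by blast
lemma ip_hh': "iso_pair S S' h h' d d' \<Longrightarrow> y \<in> S' \<Longrightarrow> h (h' y) = y" unfolding iso_pair_def by blast
lemma ip_d: "iso_pair S S' h h' d d' \<Longrightarrow> x \<in> S \<Longrightarrow> y \<in> S \<Longrightarrow> d' (h x) (h y) = d x y" unfolding iso_pair_def by blast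

lemma ip_d': assumes "iso_pair S S' h h' d d'" "x \<in> S'" "y \<in> S'" shows "d (h' x) (h' y) = d' x y"
proof -
  have "d' (h (h' x)) (h (h' y)) = d (h' x) (h' y)" using ip_d[OF assms(1) ip_h'[OF assms(1,2)] ip_h'[OF assms(1,3)]] .
  then show ?thesis using ip_hh'[OF assms(1,2)] ip_hh'[OF assms(1,3)] by simp
qed

lemma ip_sym: assumes ip: "iso_pair S S' h h' d d'" shows "iso_pair S' S h' h d' d"
  unfolding iso_pair_def
proof (intro conjI ballI)
  show "\<And>x. x \<in> S' \<Longrightarrow> h' x \<in> S" using ip_h'[OF ip] .
  show "\<And>x. x \<in> S \<Longrightarrow> h x \<in> S'" using ip_h[OF ip] .
  show "\<And>x. x \<in> S' \<Longrightarrow> h (h' x) = x" using ip_hh'[OF ip] .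
  show "\<And>x. x \<in> S \<Longrightarrow> h' (h x) = x" using ip_hh[OF ip] .
  show "\<And>x y. x \<in> S' \<Longrightarrow> y \<in> S' \<Longrightarrow> d (h' x) (h' y) = d' x y" using ip_d'[OF ip] .
qed

lemma tree_fin: "r_tree T d \<Longrightarrow> \<forall>x\<in>T. \<forall>y\<in>T. d x y < \<infinity>"
  unfolding r_tree_def by (elim conjE)
lemma tree_complete: "r_tree T d \<Longrightarrow> ext_complete T d"
  unfolding r_tree_def by (elim conjE)

lemma ip_restrict:
  assumes ip: "iso_pair S S' h h' d d'" and T: "T \<subseteq> S" and T': "T' \<subseteq> S'"
    and hT: "\<And>x. x \<in> T \<Longrightarrow> h x \<in> T'" and hT': "\<And>y. y \<in> T' \<Longrightarrow> h' y \<in> T"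
  shows "iso_pair T T' h h' d d'"
  unfolding iso_pair_def using hT hT' ip_hh[OF ip] ip_hh'[OF ip] ip_d[OF ip] T T' by (meson subsetD)

lemma ip_image: assumes ip: "iso_pair S S' h h' d d'" and G: "G' \<subseteq> S'" shows "h ` (h' ` G') = G'"
proof -
  have "h ` (h' ` G') = (\<lambda>y. h (h' y)) ` G'" by (simp add: image_image)
  also have "\<dots> = G'" using ip_hh'[OF ip] G by (simp add: subset_eq)
  finally show ?thesis .
qed

lemma tr_em: assumes ip: "iso_pair S S' h h' d d'" and em: "ext_metric S d" shows "ext_metric S' d'"
  unfolding ext_metric_def
proof (intro conjI ballI)
  fix x y assume xy: "x \<in> S'" "y \<in> S'"
  have x': "h' x \<in> S" and y': "h' y \<in> S" using ip_h'[OF ip] xy by auto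
  have e1: "d' x y = d (h' x) (h' y)" using ip_d'[OF ip xy] by simp
  have e2: "(h' x = h' y) = (x = y)"
  proof
    assume "h' x = h' y"
    then have "h (h' x) = h (h' y)" by simp
    then show "x = y" using ip_hh'[OF ip xy(1)] ip_hh'[OF ip xy(2)] by simp
  qed simp
  have "(d (h' x) (h' y) = 0) = (h' x = h' y)" using em x' y' unfolding ext_metric_def by blast
  then show "(d' x y = 0) = (x = y)" using e1 e2 by simp
  show "d' x y = d' y x" using ip_d'[OF ip xy] ip_d'[OF ip xy(2,1)] em_sym[OF em x' y'] by simp
next
  fix x y z assume xyz: "x \<in> S'" "y \<in> S'" "z \<in> S'"
  have "d (h' x) (h' z) \<le> d (h' x) (h' y) + d (h' y) (h' z)"
    using em_tri[OF em ip_h'[OF ip xyz(1)] ip_h'[OF ip xyz(2)] ip_h'[OF ip xyz(3)]] .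
  then show "d' x z \<le> d' x y + d' y z"
    using ip_d'[OF ip xyz(1,3)] ip_d'[OF ip xyz(1,2)] ip_d'[OF ip xyz(2,3)] by simp
qed

lemma tr_complete: assumes ip: "iso_pair S S' h h' d d'" and c: "ext_complete S d" shows "ext_complete S' d'"
  unfolding ext_complete_def
proof (intro allI impI, elim conjE)
  fix s assume sS: "\<forall>n. s n \<in> S'" and cau: "ext_cauchy d' s"
  define t where "t n = h' (s n)" for n
  have tS: "t n \<in> S" for n unfolding t_def using ip_h'[OF ip] sS by blast
  have dt: "d (t m) (t n) = d' (s m) (s n)" for m n unfolding t_def using ip_d'[OF ip] sS by blast
  have caut: "ext_cauchy d t" using cau unfolding ext_cauchy_def dt .
  obtain z where z: "z \<in> S" "ext_converges_to d t z" using complete_conv[of S d t] c tS caut by blast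
  have "d' (s n) (h z) = d (t n) z" for n
    unfolding t_def using ip_d[OF ip ip_h'[OF ip] z(1)] ip_hh'[OF ip] sS by metis
  then have "ext_converges_to d' s (h z)" using z(2) unfolding ext_converges_to_def by simp
  then show "\<exists>x\<in>S'. ext_converges_to d' s x" using ip_h[OF ip z(1)] by blast
qed

lemma tr_arc:
  assumes ip: "iso_pair S S' h h' d d'" and arc: "arc_between S d x y G"
  shows "arc_between S' d' (h x) (h y) (h ` G)"
proof -
  obtain a b g where g: "a \<le> b" "g ` {a..b} = G" "G \<subseteq> S" "inj_on g {a..b}"
      "path_cont_on {a..b} d g" "g a = x" "g b = y"
    using arc unfolding arc_between_def by blast
  have gS: "g t \<in> S" if "t \<in> {a..b}" for t using g(2,3) that by blast
  have "path_cont_on {a..b} d' (h \<circ> g)"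
    using g(5) unfolding path_cont_on_def comp_def using ip_d[OF ip gS gS] by simp
  moreover have "inj_on (h \<circ> g) {a..b}"
  proof (rule inj_onI)
    fix s t assume st: "s \<in> {a..b}" "t \<in> {a..b}" "(h \<circ> g) s = (h \<circ> g) t"
    then have "h' (h (g s)) = h' (h (g t))" by simp
    then have "g s = g t" using ip_hh[OF ip gS[OF st(1)]] ip_hh[OF ip gS[OF st(2)]] by simp
    then show "s = t" using g(4) st by (meson inj_onD)
  qed
  moreover have "(h \<circ> g) ` {a..b} = h ` G" using g(2) image_image[of h g "{a..b}"] by (simp add: comp_def)
  moreover have "h ` G \<subseteq> S'" using ip_h[OF ip] g(3) by blast
  ultimately show ?thesis unfolding arc_between_def using g(1,6,7)
    by (intro exI[of _ a] exI[of _ b] exI[of _ "h \<circ> g"]) simp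
qed

lemma tr_tree: assumes ip: "iso_pair T T' h h' d d'" and tr: "r_tree T d" shows "r_tree T' d'"
proof -
  have ip': "iso_pair T' T h' h d' d" using ip_sym[OF ip] .
  have em: "ext_metric T' d'" using tr_em[OF ip tree_em[OF tr]] .
  have fin: "\<forall>x\<in>T'. \<forall>y\<in>T'. d' x y < \<infinity>"
  proof (intro ballI)
    fix x y assume xy: "x \<in> T'" "y \<in> T'"
    have "d (h' x) (h' y) < \<infinity>" using tree_fin[OF tr] ip_h'[OF ip xy(1)] ip_h'[OF ip xy(2)] by blast
    then show "d' x y < \<infinity>" using ip_d'[OF ip xy] by simp
  qed
  have cpl: "ext_complete T' d'" using tr_complete[OF ip tree_complete[OF tr]] .
  have eu: "\<forall>x\<in>T'. \<forall>y\<in>T'. \<exists>!A. arc_between T' d' x y A"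
  proof (intro ballI)
    fix x y assume xy: "x \<in> T'" "y \<in> T'"
    have xy': "h' x \<in> T" "h' y \<in> T" using ip_h'[OF ip] xy by auto
    obtain G where G: "arc_between T d (h' x) (h' y) G" using tree_exists[OF tr xy'] by blast
    have ex: "arc_between T' d' x y (h ` G)" using tr_arc[OF ip G] ip_hh'[OF ip] xy by simp
    have un: "A = h ` G" if A: "arc_between T' d' x y A" for A
    proof -
      have "arc_between T d (h' x) (h' y) (h' ` A)" using tr_arc[OF ip' A] .
      then have "h' ` A = G" using tree_unique[OF tr xy' _ G] by blast
      then have "h ` (h' ` A) = h ` G" by simp
      moreover have "h ` (h' ` A) = A" using ip_image[OF ip] arc_ends[OF A] by blast
      ultimately show ?thesis by simp
    qed
    show "\<exists>!A. arc_between T' d' x y A" using ex un by blast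
  qed
  have isoc: "\<forall>x\<in>T'. \<forall>y\<in>T'. \<forall>A. arc_between T' d' x y A \<longrightarrow>
        (\<exists>L::real. \<exists>\<phi>. L \<ge> 0 \<and> \<phi> ` {0..L} = A \<and>
           (\<forall>s\<in>{0..L}. \<forall>t\<in>{0..L}. d' (\<phi> s) (\<phi> t) = ennreal \<bar>s - t\<bar>))"
  proof (intro ballI allI impI)
    fix x y A assume xy: "x \<in> T'" "y \<in> T'" and A: "arc_between T' d' x y A"
    have xy': "h' x \<in> T" "h' y \<in> T" using ip_h'[OF ip] xy by auto
    have arc': "arc_between T d (h' x) (h' y) (h' ` A)" using tr_arc[OF ip' A] .
    have "\<exists>L::real. \<exists>\<phi>. L \<ge> 0 \<and> \<phi> ` {0..L} = h' ` A \<and>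
           (\<forall>s\<in>{0..L}. \<forall>t\<in>{0..L}. d (\<phi> s) (\<phi> t) = ennreal \<bar>s - t\<bar>)"
      using tree_isoarc[OF tr xy' arc'] .
    then obtain L \<phi> where L: "L \<ge> 0" "\<phi> ` {0..L} = h' ` A"
      "\<forall>s\<in>{0..L}. \<forall>t\<in>{0..L}. d (\<phi> s) (\<phi> t) = ennreal \<bar>s - t\<bar>"
      by (elim exE conjE)
    have AT: "A \<subseteq> T'" using arc_ends[OF A] by blast
    have \<phi>T: "\<phi> s \<in> T" if "s \<in> {0..L}" for s
    proof -
      have "\<phi> s \<in> h' ` A" using L(2) that by blast
      then obtain a where "a \<in> A" "\<phi> s = h' a" by blast
      then show ?thesis using AT ip_h'[OF ip] by auto
    qed
    have "(h \<circ> \<phi>) ` {0..L} = h ` (\<phi> ` {0..L})" using image_image[of h \<phi> "{0..L}"] by (simp add: comp_def)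
    then have "(h \<circ> \<phi>) ` {0..L} = A" using L(2) ip_image[OF ip AT] by simp
    moreover have "\<forall>s\<in>{0..L}. \<forall>t\<in>{0..L}. d' ((h \<circ> \<phi>) s) ((h \<circ> \<phi>) t) = ennreal \<bar>s - t\<bar>"
    proof (intro ballI)
      fix s t assume st: "s \<in> {0..L}" "t \<in> {0..L}"
      have "d' (h (\<phi> s)) (h (\<phi> t)) = d (\<phi> s) (\<phi> t)" using ip_d[OF ip \<phi>T[OF st(1)] \<phi>T[OF st(2)]] .
      also have "\<dots> = ennreal \<bar>s - t\<bar>" using L(3) st by blast
      finally show "d' ((h \<circ> \<phi>) s) ((h \<circ> \<phi>) t) = ennreal \<bar>s - t\<bar>" by simp
    qed
    ultimately show "\<exists>L::real. \<exists>\<phi>. L \<ge> 0 \<and> \<phi> ` {0..L} = A \<and>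
           (\<forall>s\<in>{0..L}. \<forall>t\<in>{0..L}. d' (\<phi> s) (\<phi> t) = ennreal \<bar>s - t\<bar>)" using L(1)
      by (intro exI[of _ L] exI[of _ "h \<circ> \<phi>"]) simp
  qed
  show ?thesis unfolding r_tree_def using em fin cpl eu isoc by (intro conjI)
qed

lemma tr_forest: assumes ip: "iso_pair S S' h h' d d'" and f: "r_forest S d" shows "r_forest S' d'"
proof -
  have em: "ext_metric S' d'" using tr_em[OF ip forest_em[OF f]] .
  have cpl: "ext_complete S' d'" using tr_complete[OF ip forest_complete[OF f]] .
  have tr: "r_tree {y\<in>S'. d' x y < \<infinity>} d'" if x: "x \<in> S'" for x
  proof -
    have x': "h' x \<in> S" using ip_h'[OF ip x] .
    have trT: "r_tree {y\<in>S. d (h' x) y < \<infinity>} d" using forest_tree[OF f x'] .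
    have "iso_pair {y\<in>S. d (h' x) y < \<infinity>} {y\<in>S'. d' x y < \<infinity>} h h' d d'"
    proof (rule ip_restrict[OF ip])
      fix z assume z: "z \<in> {y\<in>S. d (h' x) y < \<infinity>}"
      then have "d' (h (h' x)) (h z) = d (h' x) z" using ip_d[OF ip x'] by blast
      then show "h z \<in> {y\<in>S'. d' x y < \<infinity>}" using z ip_hh'[OF ip x] ip_h[OF ip] by auto
    next
      fix z assume z: "z \<in> {y\<in>S'. d' x y < \<infinity>}"
      then show "h' z \<in> {y\<in>S. d (h' x) y < \<infinity>}" using ip_d'[OF ip x] ip_h'[OF ip] by auto
    qed auto
    then show ?thesis using tr_tree trT by blast
  qed
  show ?thesis unfolding r_forest_def using em cpl tr by blast
qed


lemma abs_enn_le: fixes a b :: ennreal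
  assumes "a \<le> 1" "b \<le> 1" "a \<le> b + \<delta>" "b \<le> a + \<delta>"
  shows "ennreal \<bar>enn2real a - enn2real b\<bar> \<le> \<delta>"
proof (cases "\<delta> = top")
  case True then show ?thesis by simp
next
  case False
  obtain r where r: "\<delta> = ennreal r" "0 \<le> r" using False by (cases \<delta> rule: ennreal_cases) auto
  obtain p where p: "a = ennreal p" "0 \<le> p" using assms(1) by (cases a rule: ennreal_cases) (auto simp: top_unique)
  obtain q where q: "b = ennreal q" "0 \<le> q" using assms(2) by (cases b rule: ennreal_cases) (auto simp: top_unique)
  have "ennreal p \<le> ennreal q + ennreal r" using assms(3) p q r by simp
  then have "ennreal p \<le> ennreal (q + r)" using q r by (simp only: ennreal_plus)
  then have 1: "p \<le> q + r" by (metis add_nonneg_nonneg ennreal_le_iff q(2) r(2))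
  have "ennreal q \<le> ennreal p + ennreal r" using assms(4) p q r by simp
  then have "ennreal q \<le> ennreal (p + r)" using p r by (simp only: ennreal_plus)
  then have 2: "q \<le> p + r" by (metis add_nonneg_nonneg ennreal_le_iff p(2) r(2))
  have "\<bar>p - q\<bar> \<le> r" using 1 2 by linarith
  then show ?thesis using p q r by (simp add: ennreal_leI)
qed

lemma abs_to_le: fixes p q :: real
  assumes "0 \<le> p" "0 \<le> q" "ennreal \<bar>p - q\<bar> \<le> D"
  shows "ennreal p \<le> ennreal q + D"
proof -
  have "ennreal p \<le> ennreal (q + \<bar>p - q\<bar>)" by (intro ennreal_leI) linarith
  also have "\<dots> = ennreal q + ennreal \<bar>p - q\<bar>" using assms(2) by (simp add: ennreal_plus)
  also have "\<dots> \<le> ennreal q + D" using assms(3) by (rule add_left_mono)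
  finally show ?thesis .
qed

lemma abs_tri_enn: fixes p q r :: real
  shows "ennreal \<bar>p - q\<bar> \<le> ennreal \<bar>p - r\<bar> + ennreal \<bar>r - q\<bar>"
  by (simp add: ennreal_plus[symmetric] del: ennreal_plus)

lemma min1_le: fixes F F' \<delta> :: ennreal
  assumes "F \<le> F' + \<delta>" shows "min 1 F \<le> min 1 F' + \<delta>"
proof (cases "F' \<le> 1")
  case True
  then have "min 1 F' = F'" by simp
  then show ?thesis using assms by (simp add: min.coboundedI2)
next
  case False
  then have "min 1 F' = 1" by simp
  moreover have "min 1 F \<le> 1" by simp
  ultimately show ?thesis by (metis add_increasing2 zero_le)
qed

lemma lip_same:
  assumes l: "lip_1_1 S d R0" and uv: "u \<in> S" "v \<in> S" "u' \<in> S" "v' \<in> S"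
  shows "ennreal \<bar>R0 u v - R0 u' v'\<bar> \<le> d u u' + d v v'"
proof -
  have "ennreal \<bar>R0 u v - R0 u' v\<bar> \<le> d u u'" using l uv unfolding lip_1_1_def by blast
  moreover have "ennreal \<bar>R0 u' v - R0 u' v'\<bar> \<le> d v v'" using l uv unfolding lip_1_1_def by blast
  ultimately show ?thesis using abs_tri_enn[of "R0 u v" "R0 u' v'" "R0 u' v"] add_mono order_trans by blast
qed

lemma lip_bounds: "lip_1_1 S d R \<Longrightarrow> x \<in> S \<Longrightarrow> y \<in> S \<Longrightarrow> 0 \<le> R x y \<and> R x y \<le> 1"
  unfolding lip_1_1_def by blast

lemma lip_extend:
  fixes B C :: "'a set" and d :: "'a \<Rightarrow> 'a \<Rightarrow> ennreal" and R0 :: "'a \<Rightarrow> 'a \<Rightarrow> real"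
  assumes em: "ext_metric (B \<union> C) d" and lB: "lip_1_1 B d R0" and lC: "lip_1_1 C d R0"
    and cross: "\<And>u v. u \<in> B \<Longrightarrow> v \<in> C \<Longrightarrow> d u v = (INF a\<in>B \<inter> C. d u a + d a v)"
  shows "\<exists>R. lip_1_1 (B \<union> C) d R \<and> (\<forall>x\<in>B. \<forall>y\<in>B. R x y = R0 x y) \<and> (\<forall>x\<in>C. \<forall>y\<in>C. R x y = R0 x y)"
proof -
  define K where "K = B \<times> B \<union> C \<times> C"
  have KN: "fst k \<in> B \<union> C" "snd k \<in> B \<union> C" if "k \<in> K" for k using that unfolding K_def by auto
  have R01: "0 \<le> R0 u v" "R0 u v \<le> 1" if "(u, v) \<in> K" for u v
  proof -
    have "(u \<in> B \<and> v \<in> B) \<or> (u \<in> C \<and> v \<in> C)" using that unfolding K_def by blast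
    then show "0 \<le> R0 u v" "R0 u v \<le> 1" using lip_bounds[OF lB, of u v] lip_bounds[OF lC, of u v] by blast+
  qed
  have symd: "d x y = d y x" if "x \<in> B \<union> C" "y \<in> B \<union> C" for x y using em_sym[OF em that] .
  have crossBC: "ennreal \<bar>R0 u v - R0 u' v'\<bar> \<le> d u u' + d v v'"
    if uv: "u \<in> B" "v \<in> B" and uv': "u' \<in> C" "v' \<in> C" for u v u' v'
  proof -
    have "ennreal \<bar>R0 u v - R0 u' v'\<bar> \<le> (INF a\<in>B \<inter> C. d u a + d a u') + (INF a\<in>B \<inter> C. d v a + d a v')"
    proof (rule le_INF_add2)
      fix a a' assume a: "a \<in> B \<inter> C" and a': "a' \<in> B \<inter> C"
      have 1: "ennreal \<bar>R0 u v - R0 a a'\<bar> \<le> d u a + d v a'" using lip_same[OF lB] uv a a' by blast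
      have 2: "ennreal \<bar>R0 a a' - R0 u' v'\<bar> \<le> d a u' + d a' v'" using lip_same[OF lC] uv' a a' by blast
      have "ennreal \<bar>R0 u v - R0 u' v'\<bar> \<le> (d u a + d v a') + (d a u' + d a' v')"
        using abs_tri_enn[of "R0 u v" "R0 u' v'" "R0 a a'"] add_mono[OF 1 2] by (rule order_trans)
      also have "\<dots> = d u a + d a u' + (d v a' + d a' v')" by (simp add: ac_simps)
      finally show "ennreal \<bar>R0 u v - R0 u' v'\<bar> \<le> d u a + d a u' + (d v a' + d a' v')" .
    qed
    also have "\<dots> = d u u' + d v v'" by (simp only: cross[OF uv(1) uv'(1)] cross[OF uv(2) uv'(2)])
    finally show ?thesis .
  qed
  have Klip: "ennreal \<bar>R0 u v - R0 u' v'\<bar> \<le> d u u' + d v v'" if k: "(u, v) \<in> K" "(u', v') \<in> K" for u v u' v'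
  proof -
    consider "u \<in> B" "v \<in> B" "u' \<in> B" "v' \<in> B" | "u \<in> C" "v \<in> C" "u' \<in> C" "v' \<in> C"
      | "u \<in> B" "v \<in> B" "u' \<in> C" "v' \<in> C" | "u \<in> C" "v \<in> C" "u' \<in> B" "v' \<in> B"
      using k unfolding K_def by blast
    then show ?thesis
    proof cases
      case 1 then show ?thesis using lip_same[OF lB] by blast
    next
      case 2 then show ?thesis using lip_same[OF lC] by blast
    next
      case 3 then show ?thesis using crossBC by blast
    next
      case 4
      have "ennreal \<bar>R0 u' v' - R0 u v\<bar> \<le> d u' u + d v' v" using crossBC 4 by blast
      moreover have "d u' u = d u u'" "d v' v = d v v'" using symd 4 by auto
      ultimately show ?thesis by (simp add: abs_minus_commute)
    qed
  qed
  define F where "F x y = (INF k\<in>K. ennreal (R0 (fst k) (snd k)) + d x (fst k) + d y (snd k))" for x y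
  define R where "R x y = enn2real (min 1 (F x y))" for x y
  have FK: "F x y = ennreal (R0 x y)" if xy: "(x, y) \<in> K" for x y
  proof (rule antisym)
    have xyN: "x \<in> B \<union> C" "y \<in> B \<union> C" using KN[OF xy] by auto
    have "F x y \<le> ennreal (R0 x y) + d x x + d y y" unfolding F_def using xy by (rule INF_lower2) simp
    then show "F x y \<le> ennreal (R0 x y)" using em_zero[OF em xyN(1)] em_zero[OF em xyN(2)] by simp
    show "ennreal (R0 x y) \<le> F x y" unfolding F_def
    proof (rule INF_greatest)
      fix k assume k: "k \<in> K"
      obtain u v where k': "k = (u, v)" by (cases k)
      have "ennreal (R0 x y) \<le> ennreal (R0 u v) + (d x u + d y v)"
        using abs_to_le[OF R01(1)[OF xy] R01(1)] Klip[OF xy] k k' by simp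
      then show "ennreal (R0 x y) \<le> ennreal (R0 (fst k) (snd k)) + d x (fst k) + d y (snd k)"
        using k' by (simp add: add.assoc)
    qed
  qed
  have F1: "F x y \<le> F x' y + d x x'" if "x \<in> B \<union> C" "x' \<in> B \<union> C" for x x' y
    unfolding F_def[of x' y]
  proof (rule le_INF_add)
    fix k assume k: "k \<in> K"
    have "F x y \<le> ennreal (R0 (fst k) (snd k)) + d x (fst k) + d y (snd k)" unfolding F_def using k by (rule INF_lower)
    also have "d x (fst k) \<le> d x x' + d x' (fst k)" using em_tri[OF em that KN(1)[OF k]] .
    then have "ennreal (R0 (fst k) (snd k)) + d x (fst k) + d y (snd k) \<le>
       ennreal (R0 (fst k) (snd k)) + (d x x' + d x' (fst k)) + d y (snd k)" by (intro add_mono) auto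
    also have "\<dots> = ennreal (R0 (fst k) (snd k)) + d x' (fst k) + d y (snd k) + d x x'" by (simp add: ac_simps)
    finally show "F x y \<le> ennreal (R0 (fst k) (snd k)) + d x' (fst k) + d y (snd k) + d x x'" .
  qed
  have F2: "F x y \<le> F x y' + d y y'" if "y \<in> B \<union> C" "y' \<in> B \<union> C" for x y y'
    unfolding F_def[of x y']
  proof (rule le_INF_add)
    fix k assume k: "k \<in> K"
    have "F x y \<le> ennreal (R0 (fst k) (snd k)) + d x (fst k) + d y (snd k)" unfolding F_def using k by (rule INF_lower)
    also have "d y (snd k) \<le> d y y' + d y' (snd k)" using em_tri[OF em that KN(2)[OF k]] .
    then have "ennreal (R0 (fst k) (snd k)) + d x (fst k) + d y (snd k) \<le>
       ennreal (R0 (fst k) (snd k)) + d x (fst k) + (d y y' + d y' (snd k))" by (intro add_mono) auto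
    also have "\<dots> = ennreal (R0 (fst k) (snd k)) + d x (fst k) + d y' (snd k) + d y y'" by (simp add: ac_simps)
    finally show "F x y \<le> ennreal (R0 (fst k) (snd k)) + d x (fst k) + d y' (snd k) + d y y'" .
  qed
  have lipR: "lip_1_1 (B \<union> C) d R" unfolding lip_1_1_def
  proof (intro conjI ballI)
    fix x y assume "x \<in> B \<union> C" "y \<in> B \<union> C"
    show "0 \<le> R x y" unfolding R_def by simp
    have "min 1 (F x y) \<le> 1" by simp
    then show "R x y \<le> 1" unfolding R_def by (metis enn2real_1 enn2real_mono ennreal_one_less_top)
  next
    fix a x y assume H: "a \<in> B \<union> C" "x \<in> B \<union> C" "y \<in> B \<union> C"
    show "ennreal \<bar>R a x - R a y\<bar> \<le> d x y" unfolding R_def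
      by (rule abs_enn_le) (use min1_le[OF F2[OF H(2,3)]] min1_le[OF F2[OF H(3,2)]] symd[OF H(2,3)] in auto)
    show "ennreal \<bar>R x a - R y a\<bar> \<le> d x y" unfolding R_def
      by (rule abs_enn_le) (use min1_le[OF F1[OF H(2,3)]] min1_le[OF F1[OF H(3,2)]] symd[OF H(2,3)] in auto)
  qed
  have RK: "R x y = R0 x y" if "(x, y) \<in> K" for x y
  proof -
    have "min 1 (F x y) = ennreal (R0 x y)" using FK[OF that] R01[OF that] by (simp add: min_def ennreal_le_1)
    then show ?thesis unfolding R_def using R01[OF that] by simp
  qed
  show ?thesis using lipR RK unfolding K_def by blast
qed


locale ap =
  fixes A :: "'c set" and dA RA and B :: "'d set" and dB RB and C :: "'e set" and dC RC
    and f :: "'c \<Rightarrow> 'd" and g :: "'c \<Rightarrow> 'e"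
  assumes mA: "RFR_model A dA RA" and mB: "RFR_model B dB RB" and mC: "RFR_model C dC RC"
    and ef: "struct_embedding A dA RA B dB RB f" and eg: "struct_embedding A dA RA C dC RC g"
begin

lemma fA: "r_forest A dA" using mA unfolding RFR_model_def by blast
lemma fB: "r_forest B dB" using mB unfolding RFR_model_def by blast
lemma fC: "r_forest C dC" using mC unfolding RFR_model_def by blast
lemma lA: "lip_1_1 A dA RA" using mA unfolding RFR_model_def by blast
lemma lB: "lip_1_1 B dB RB" using mB unfolding RFR_model_def by blast
lemma lC: "lip_1_1 C dC RC" using mC unfolding RFR_model_def by blast
lemma emA: "ext_metric A dA" using forest_em[OF fA] .
lemma emB: "ext_metric B dB" using forest_em[OF fB] .
lemma emC: "ext_metric C dC" using forest_em[OF fC] .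

lemma fin: "a \<in> A \<Longrightarrow> f a \<in> B" using ef unfolding struct_embedding_def by blast
lemma gin: "a \<in> A \<Longrightarrow> g a \<in> C" using eg unfolding struct_embedding_def by blast
lemma fd: "a \<in> A \<Longrightarrow> a' \<in> A \<Longrightarrow> dB (f a) (f a') = dA a a'" using ef unfolding struct_embedding_def by blast
lemma gd: "a \<in> A \<Longrightarrow> a' \<in> A \<Longrightarrow> dC (g a) (g a') = dA a a'" using eg unfolding struct_embedding_def by blast
lemma fR: "a \<in> A \<Longrightarrow> a' \<in> A \<Longrightarrow> RB (f a) (f a') = RA a a'" using ef unfolding struct_embedding_def by blast
lemma gR: "a \<in> A \<Longrightarrow> a' \<in> A \<Longrightarrow> RC (g a) (g a') = RA a a'" using eg unfolding struct_embedding_def by blast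

lemma finj: "inj_on f A"
proof (rule inj_onI)
  fix a a' assume "a \<in> A" "a' \<in> A" "f a = f a'"
  then have "dA a a' = 0" using fd[of a a'] em_zero[OF emB fin] by metis
  then show "a = a'" using em_eq[OF emA] \<open>a \<in> A\<close> \<open>a' \<in> A\<close> by blast
qed
lemma ginj: "inj_on g A"
proof (rule inj_onI)
  fix a a' assume "a \<in> A" "a' \<in> A" "g a = g a'"
  then have "dA a a' = 0" using gd[of a a'] em_zero[OF emC gin] by metis
  then show "a = a'" using em_eq[OF emA] \<open>a \<in> A\<close> \<open>a' \<in> A\<close> by blast
qed

definition hB :: "'d \<Rightarrow> ('d + 'e) set" where
  "hB b = insert (Inl b) {Inr (g a) | a. a \<in> A \<and> f a = b}"
definition hC :: "'e \<Rightarrow> ('d + 'e) set" where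
  "hC c = insert (Inr c) {Inl (f a) | a. a \<in> A \<and> g a = c}"
definition iB :: "('d + 'e) set \<Rightarrow> 'd" where "iB X = (THE b. Inl b \<in> X)"
definition iC :: "('d + 'e) set \<Rightarrow> 'e" where "iC X = (THE c. Inr c \<in> X)"
definition B' where "B' = hB ` B"
definition C' where "C' = hC ` C"

lemma iB_hB: "iB (hB b) = b"
  unfolding iB_def hB_def by (rule the_equality) auto
lemma iC_hC: "iC (hC c) = c"
  unfolding iC_def hC_def by (rule the_equality) auto

lemma hBf: assumes a: "a \<in> A" shows "hB (f a) = hC (g a)"
proof -
  have 1: "{Inr (g a') | a'. a' \<in> A \<and> f a' = f a} = {Inr (g a)}"
    using a finj by (auto dest: inj_onD)
  have 2: "{Inl (f a') | a'. a' \<in> A \<and> g a' = g a} = {Inl (f a)}"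
    using a ginj by (auto dest: inj_onD)
  show ?thesis unfolding hB_def hC_def 1 2 by auto
qed

lemma iB_hC: "a \<in> A \<Longrightarrow> iB (hC (g a)) = f a" using hBf iB_hB by metis
lemma iC_hB: "a \<in> A \<Longrightarrow> iC (hB (f a)) = g a" using hBf iC_hC by metis

lemma hB_C: assumes b: "b \<in> B" and c: "c \<in> C" and e: "hB b = hC c" shows "\<exists>a\<in>A. b = f a \<and> c = g a"
proof -
  have "Inl b \<in> hC c" using e unfolding hB_def by auto
  then obtain a where "a \<in> A" "g a = c" "b = f a" unfolding hC_def by auto
  then show ?thesis by blast
qed

lemma BC': "B' \<inter> C' = (\<lambda>a. hB (f a)) ` A"
proof
  show "B' \<inter> C' \<subseteq> (\<lambda>a. hB (f a)) ` A"
  proof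
    fix X assume "X \<in> B' \<inter> C'"
    then obtain b c where "b \<in> B" "c \<in> C" "X = hB b" "X = hC c" unfolding B'_def C'_def by blast
    then show "X \<in> (\<lambda>a. hB (f a)) ` A" using hB_C by blast
  qed
  show "(\<lambda>a. hB (f a)) ` A \<subseteq> B' \<inter> C'"
  proof
    fix X assume "X \<in> (\<lambda>a. hB (f a)) ` A"
    then obtain a where a: "a \<in> A" "X = hB (f a)" by blast
    have "X \<in> B'" unfolding B'_def using a fin by blast
    moreover have "X \<in> C'" unfolding C'_def using a gin hBf by blast
    ultimately show "X \<in> B' \<inter> C'" by blast
  qed
qed

lemma inBC: "X \<in> B' \<inter> C' \<longleftrightarrow> (\<exists>a\<in>A. X = hB (f a))" using BC' by auto

definition dN :: "('d + 'e) set \<Rightarrow> ('d + 'e) set \<Rightarrow> ennreal" where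
  "dN X Y = (if X \<in> B' \<and> Y \<in> B' then dB (iB X) (iB Y)
     else if X \<in> C' \<and> Y \<in> C' then dC (iC X) (iC Y)
     else if X \<in> B' then (INF a\<in>A. dB (iB X) (f a) + dC (g a) (iC Y))
     else (INF a\<in>A. dC (iC X) (g a) + dB (f a) (iB Y)))"

lemma dN_BB: assumes "X \<in> B'" "Y \<in> B'" shows "dN X Y = dB (iB X) (iB Y)"
proof -
  have h: "X \<in> B' \<and> Y \<in> B'" using assms by blast
  show ?thesis unfolding dN_def if_P[OF h] ..
qed

lemma dN_CC: assumes X: "X \<in> C'" and Y: "Y \<in> C'" shows "dN X Y = dC (iC X) (iC Y)"
proof (cases "X \<in> B' \<and> Y \<in> B'")
  case True
  have "X \<in> B' \<inter> C'" "Y \<in> B' \<inter> C'" using True X Y by blast+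
  then have "\<exists>a\<in>A. X = hB (f a)" "\<exists>a\<in>A. Y = hB (f a)" using inBC by (simp_all only:)
  then obtain a a' where a: "a \<in> A" "a' \<in> A" "X = hB (f a)" "Y = hB (f a')" by (elim bexE)
  have "dN X Y = dB (f a) (f a')" using True a by (simp add: dN_BB iB_hB)
  also have "\<dots> = dC (g a) (g a')" using fd gd a by simp
  also have "\<dots> = dC (iC X) (iC Y)" using a iC_hB by simp
  finally show ?thesis .
next
  case False
  have h: "X \<in> C' \<and> Y \<in> C'" using X Y by blast
  show ?thesis unfolding dN_def if_not_P[OF False] if_P[OF h] ..
qed

lemma dN_BC: assumes "X \<in> B'" "X \<notin> C'" "Y \<in> C'" "Y \<notin> B'"
  shows "dN X Y = (INF a\<in>A. dB (iB X) (f a) + dC (g a) (iC Y))"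
proof -
  have h1: "\<not> (X \<in> B' \<and> Y \<in> B')" "\<not> (X \<in> C' \<and> Y \<in> C')" using assms by blast+
  show ?thesis unfolding dN_def if_not_P[OF h1(1)] if_not_P[OF h1(2)] if_P[OF assms(1)] ..
qed

lemma dN_CB: assumes "X \<in> C'" "X \<notin> B'" "Y \<in> B'" "Y \<notin> C'"
  shows "dN X Y = (INF a\<in>A. dC (iC X) (g a) + dB (f a) (iB Y))"
proof -
  have h1: "\<not> (X \<in> B' \<and> Y \<in> B')" "\<not> (X \<in> C' \<and> Y \<in> C')" using assms by blast+
  show ?thesis unfolding dN_def if_not_P[OF h1(1)] if_not_P[OF h1(2)] if_not_P[OF assms(2)] ..
qed

lemma ipB: "iso_pair B B' hB iB dB dN"
  unfolding iso_pair_def B'_def using iB_hB dN_BB[unfolded B'_def] by auto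

lemma ipC: "iso_pair C C' hC iC dC dN"
  unfolding iso_pair_def C'_def using iC_hC dN_CC[unfolded C'_def] by auto

lemma ipA: "iso_pair A (B' \<inter> C') (\<lambda>a. hB (f a)) (\<lambda>X. inv_into A f (iB X)) dA dN"
  unfolding iso_pair_def
proof (intro conjI ballI)
  fix a assume a: "a \<in> A"
  show "hB (f a) \<in> B' \<inter> C'" using a inBC by blast
  show "inv_into A f (iB (hB (f a))) = a" using a finj iB_hB by (simp add: inv_into_f_f)
next
  fix X assume "X \<in> B' \<inter> C'"
  then obtain a where a: "a \<in> A" "X = hB (f a)" using inBC by blast
  have "inv_into A f (iB X) = a" using a finj iB_hB by (simp add: inv_into_f_f)
  then show "inv_into A f (iB X) \<in> A" "hB (f (inv_into A f (iB X))) = X" using a by auto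
next
  fix a a' assume a: "a \<in> A" "a' \<in> A"
  have "hB (f a) \<in> B'" "hB (f a') \<in> B'" using a fin unfolding B'_def by auto
  then show "dN (hB (f a)) (hB (f a')) = dA a a'" using dN_BB iB_hB fd a by simp
qed

end


context ap begin

lemma iBin: "X \<in> B' \<Longrightarrow> iB X \<in> B" using ip_h'[OF ipB] .
lemma iCin: "X \<in> C' \<Longrightarrow> iC X \<in> C" using ip_h'[OF ipC] .

lemma hBfB: "a \<in> A \<Longrightarrow> hB (f a) \<in> B'" unfolding B'_def using fin by blast
lemma hBfC: "a \<in> A \<Longrightarrow> hB (f a) \<in> C'" unfolding C'_def using gin hBf by (metis image_eqI)

lemma inBC_E: assumes "X \<in> B'" "X \<in> C'" obtains a where "a \<in> A" "X = hB (f a)"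
proof -
  have "X \<in> B' \<inter> C'" using assms by blast
  then have "\<exists>a\<in>A. X = hB (f a)" using inBC by (simp only:)
  then show ?thesis using that by (elim bexE)
qed

lemma symN: assumes X: "X \<in> B' \<union> C'" and Y: "Y \<in> B' \<union> C'" shows "dN X Y = dN Y X"
proof -
  consider "X \<in> B'" "Y \<in> B'" | "X \<in> C'" "Y \<in> C'" | "X \<in> B'" "X \<notin> C'" "Y \<in> C'" "Y \<notin> B'"
    | "X \<in> C'" "X \<notin> B'" "Y \<in> B'" "Y \<notin> C'" using X Y by blast
  then show ?thesis
  proof cases
    case 1 then show ?thesis using dN_BB em_sym[OF emB iBin iBin] by simp
  next
    case 2 then show ?thesis using dN_CC em_sym[OF emC iCin iCin] by simp
  next
    case 3
    have "dN X Y = (INF a\<in>A. dB (iB X) (f a) + dC (g a) (iC Y))" using dN_BC[OF 3] .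
    also have "\<dots> = (INF a\<in>A. dC (iC Y) (g a) + dB (f a) (iB X))"
    proof (rule INF_cong[OF refl])
      fix a assume a: "a \<in> A"
      have "dB (iB X) (f a) = dB (f a) (iB X)" using em_sym[OF emB iBin[OF 3(1)] fin[OF a]] .
      moreover have "dC (g a) (iC Y) = dC (iC Y) (g a)" using em_sym[OF emC gin[OF a] iCin[OF 3(3)]] .
      ultimately show "dB (iB X) (f a) + dC (g a) (iC Y) = dC (iC Y) (g a) + dB (f a) (iB X)"
        by (simp add: add.commute)
    qed
    also have "\<dots> = dN Y X" using dN_CB[OF 3(3,4,1,2)] by simp
    finally show ?thesis .
  next
    case 4
    have "dN X Y = (INF a\<in>A. dC (iC X) (g a) + dB (f a) (iB Y))" using dN_CB[OF 4] .
    also have "\<dots> = (INF a\<in>A. dB (iB Y) (f a) + dC (g a) (iC X))"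
    proof (rule INF_cong[OF refl])
      fix a assume a: "a \<in> A"
      have "dB (iB Y) (f a) = dB (f a) (iB Y)" using em_sym[OF emB iBin[OF 4(3)] fin[OF a]] .
      moreover have "dC (g a) (iC X) = dC (iC X) (g a)" using em_sym[OF emC gin[OF a] iCin[OF 4(1)]] .
      ultimately show "dC (iC X) (g a) + dB (f a) (iB Y) = dB (iB Y) (f a) + dC (g a) (iC X)"
        by (simp add: add.commute)
    qed
    also have "\<dots> = dN Y X" using dN_BC[OF 4(3,4,1,2)] by simp
    finally show ?thesis .
  qed
qed

lemma infC: assumes c: "c \<in> C" and a0: "a0 \<in> A"
  shows "(INF a\<in>A. dC (g a0) (g a) + dC (g a) c) = dC (g a0) c"
proof (rule antisym)
  have "(INF a\<in>A. dC (g a0) (g a) + dC (g a) c) \<le> dC (g a0) (g a0) + dC (g a0) c"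
    using a0 by (rule INF_lower)
  then show "(INF a\<in>A. dC (g a0) (g a) + dC (g a) c) \<le> dC (g a0) c"
    using em_zero[OF emC gin[OF a0]] by simp
  show "dC (g a0) c \<le> (INF a\<in>A. dC (g a0) (g a) + dC (g a) c)"
  proof (rule INF_greatest)
    fix a assume "a \<in> A"
    then show "dC (g a0) c \<le> dC (g a0) (g a) + dC (g a) c" using em_tri[OF emC gin[OF a0] gin c] by blast
  qed
qed

lemma infB: assumes b: "b \<in> B" and a1: "a1 \<in> A"
  shows "(INF a\<in>A. dB b (f a) + dB (f a) (f a1)) = dB b (f a1)"
proof (rule antisym)
  have "(INF a\<in>A. dB b (f a) + dB (f a) (f a1)) \<le> dB b (f a1) + dB (f a1) (f a1)"
    using a1 by (rule INF_lower)
  then show "(INF a\<in>A. dB b (f a) + dB (f a) (f a1)) \<le> dB b (f a1)"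
    using em_zero[OF emB fin[OF a1]] by simp
  show "dB b (f a1) \<le> (INF a\<in>A. dB b (f a) + dB (f a) (f a1))"
  proof (rule INF_greatest)
    fix a assume "a \<in> A"
    then show "dB b (f a1) \<le> dB b (f a) + dB (f a) (f a1)" using em_tri[OF emB b fin fin[OF a1]] by blast
  qed
qed

lemma crossN: assumes u: "u \<in> B'" and v: "v \<in> C'"
  shows "dN u v = (INF w\<in>B' \<inter> C'. dN u w + dN w v)"
proof -
  have "(INF w\<in>B' \<inter> C'. dN u w + dN w v) = (INF a\<in>A. dN u (hB (f a)) + dN (hB (f a)) v)"
    unfolding BC' by (simp only: image_image)
  also have "\<dots> = (INF a\<in>A. dB (iB u) (f a) + dC (g a) (iC v))"
  proof (rule INF_cong[OF refl])
    fix a assume a: "a \<in> A"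
    have "dN u (hB (f a)) = dB (iB u) (f a)" using dN_BB[OF u hBfB[OF a]] iB_hB by simp
    moreover have "dN (hB (f a)) v = dC (g a) (iC v)" using dN_CC[OF hBfC[OF a] v] iC_hB[OF a] by simp
    ultimately show "dN u (hB (f a)) + dN (hB (f a)) v = dB (iB u) (f a) + dC (g a) (iC v)" by simp
  qed
  finally have R: "(INF w\<in>B' \<inter> C'. dN u w + dN w v) = (INF a\<in>A. dB (iB u) (f a) + dC (g a) (iC v))" .
  show ?thesis
  proof (cases "u \<in> C'")
    case True
    obtain a0 where a0: "a0 \<in> A" "u = hB (f a0)" using inBC_E[OF u True] .
    have "dN u v = dC (iC u) (iC v)" using dN_CC[OF True v] .
    also have "\<dots> = dC (g a0) (iC v)" using a0 iC_hB by simp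
    also have "\<dots> = (INF a\<in>A. dC (g a0) (g a) + dC (g a) (iC v))" using infC[OF iCin[OF v] a0(1)] by simp
    also have "\<dots> = (INF a\<in>A. dB (iB u) (f a) + dC (g a) (iC v))"
    proof (rule INF_cong[OF refl])
      fix a assume a: "a \<in> A"
      have "dB (iB u) (f a) = dC (g a0) (g a)" using a0 a iB_hB fd gd by simp
      then show "dC (g a0) (g a) + dC (g a) (iC v) = dB (iB u) (f a) + dC (g a) (iC v)" by simp
    qed
    finally show ?thesis using R by simp
  next
    case uC: False
    show ?thesis
    proof (cases "v \<in> B'")
      case True
      obtain a1 where a1: "a1 \<in> A" "v = hB (f a1)" using inBC_E[OF True v] .
      have "dN u v = dB (iB u) (iB v)" using dN_BB[OF u True] .
      also have "\<dots> = dB (iB u) (f a1)" using a1 iB_hB by simp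
      also have "\<dots> = (INF a\<in>A. dB (iB u) (f a) + dB (f a) (f a1))" using infB[OF iBin[OF u] a1(1)] by simp
      also have "\<dots> = (INF a\<in>A. dB (iB u) (f a) + dC (g a) (iC v))"
      proof (rule INF_cong[OF refl])
        fix a assume a: "a \<in> A"
        have "dC (g a) (iC v) = dB (f a) (f a1)" using a1 a iC_hB fd gd by simp
        then show "dB (iB u) (f a) + dB (f a) (f a1) = dB (iB u) (f a) + dC (g a) (iC v)" by simp
      qed
      finally show ?thesis using R by simp
    next
      case False
      show ?thesis using dN_BC[OF u uC v False] R by simp
    qed
  qed
qed

lemma glueN: "glue B' C' dN"
proof
  show "r_forest B' dN" using tr_forest[OF ipB fB] .
  show "r_forest C' dN" using tr_forest[OF ipC fC] .
  show "r_forest (B' \<inter> C') dN" using tr_forest[OF ipA fA] .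
  show "\<And>x y. x \<in> B' \<union> C' \<Longrightarrow> y \<in> B' \<union> C' \<Longrightarrow> dN x y = dN y x" using symN .
  show "\<And>u v. u \<in> B' \<Longrightarrow> v \<in> C' \<Longrightarrow> dN u v = (INF a\<in>B' \<inter> C'. dN u a + dN a v)" using crossN .
qed

definition RN0 :: "('d + 'e) set \<Rightarrow> ('d + 'e) set \<Rightarrow> real" where
  "RN0 X Y = (if X \<in> B' \<and> Y \<in> B' then RB (iB X) (iB Y) else RC (iC X) (iC Y))"

lemma RN0_BB: assumes "X \<in> B'" "Y \<in> B'" shows "RN0 X Y = RB (iB X) (iB Y)"
proof -
  have h: "X \<in> B' \<and> Y \<in> B'" using assms by blast
  show ?thesis unfolding RN0_def if_P[OF h] ..
qed

lemma RN0_CC: assumes X: "X \<in> C'" and Y: "Y \<in> C'" shows "RN0 X Y = RC (iC X) (iC Y)"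
proof (cases "X \<in> B' \<and> Y \<in> B'")
  case True
  obtain a where a: "a \<in> A" "X = hB (f a)" using inBC_E[of X] True X by blast
  obtain a' where a': "a' \<in> A" "Y = hB (f a')" using inBC_E[of Y] True Y by blast
  have "RN0 X Y = RB (f a) (f a')" using RN0_BB True a a' iB_hB by simp
  also have "\<dots> = RC (g a) (g a')" using fR gR a a' by simp
  also have "\<dots> = RC (iC X) (iC Y)" using a a' iC_hB by simp
  finally show ?thesis .
next
  case False
  show ?thesis unfolding RN0_def if_not_P[OF False] ..
qed

lemma lipB': "lip_1_1 B' dN RN0"
  unfolding lip_1_1_def
proof (intro conjI ballI)
  fix x y assume xy: "x \<in> B'" "y \<in> B'"
  show "0 \<le> RN0 x y" "RN0 x y \<le> 1" using lip_bounds[OF lB iBin[OF xy(1)] iBin[OF xy(2)]] RN0_BB[OF xy] by auto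
next
  fix a x y assume H: "a \<in> B'" "x \<in> B'" "y \<in> B'"
  have l: "ennreal \<bar>RB a' x' - RB a' y'\<bar> \<le> dB x' y'" "ennreal \<bar>RB x' a' - RB y' a'\<bar> \<le> dB x' y'"
    if "a' \<in> B" "x' \<in> B" "y' \<in> B" for a' x' y' using lB that unfolding lip_1_1_def by blast+
  show "ennreal \<bar>RN0 a x - RN0 a y\<bar> \<le> dN x y"
    using l(1)[OF iBin[OF H(1)] iBin[OF H(2)] iBin[OF H(3)]] RN0_BB H dN_BB by simp
  show "ennreal \<bar>RN0 x a - RN0 y a\<bar> \<le> dN x y"
    using l(2)[OF iBin[OF H(1)] iBin[OF H(2)] iBin[OF H(3)]] RN0_BB H dN_BB by simp
qed

lemma lipC': "lip_1_1 C' dN RN0"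
  unfolding lip_1_1_def
proof (intro conjI ballI)
  fix x y assume xy: "x \<in> C'" "y \<in> C'"
  show "0 \<le> RN0 x y" "RN0 x y \<le> 1" using lip_bounds[OF lC iCin[OF xy(1)] iCin[OF xy(2)]] RN0_CC[OF xy] by auto
next
  fix a x y assume H: "a \<in> C'" "x \<in> C'" "y \<in> C'"
  have l: "ennreal \<bar>RC a' x' - RC a' y'\<bar> \<le> dC x' y'" "ennreal \<bar>RC x' a' - RC y' a'\<bar> \<le> dC x' y'"
    if "a' \<in> C" "x' \<in> C" "y' \<in> C" for a' x' y' using lC that unfolding lip_1_1_def by blast+
  show "ennreal \<bar>RN0 a x - RN0 a y\<bar> \<le> dN x y"
    using l(1)[OF iCin[OF H(1)] iCin[OF H(2)] iCin[OF H(3)]] RN0_CC H dN_CC by simp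
  show "ennreal \<bar>RN0 x a - RN0 y a\<bar> \<le> dN x y"
    using l(2)[OF iCin[OF H(1)] iCin[OF H(2)] iCin[OF H(3)]] RN0_CC H dN_CC by simp
qed

lemma amalg:
  "\<exists>(N::('d + 'e) set set) dN RN h k.
          RFR_model N dN RN \<and>
          struct_embedding B dB RB N dN RN h \<and>
          struct_embedding C dC RC N dN RN k \<and>
          (\<forall>a\<in>A. h (f a) = k (g a))"
proof -
  interpret gl: glue B' C' dN by (rule glueN)
  obtain R where R: "lip_1_1 (B' \<union> C') dN R" "\<forall>x\<in>B'. \<forall>y\<in>B'. R x y = RN0 x y" "\<forall>x\<in>C'. \<forall>y\<in>C'. R x y = RN0 x y"
    using lip_extend[OF gl.em_N lipB' lipC' crossN] by blast
  have M: "RFR_model (B' \<union> C') dN R" unfolding RFR_model_def using gl.forest_N R(1) by blast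
  have eB: "struct_embedding B dB RB (B' \<union> C') dN R hB"
    unfolding struct_embedding_def
  proof (intro conjI ballI)
    show "hB ` B \<subseteq> B' \<union> C'" unfolding B'_def by blast
    fix x y assume xy: "x \<in> B" "y \<in> B"
    have m: "hB x \<in> B'" "hB y \<in> B'" using xy unfolding B'_def by auto
    show "dN (hB x) (hB y) = dB x y" using ip_d[OF ipB xy] .
    show "R (hB x) (hB y) = RB x y" using R(2) m RN0_BB[OF m] iB_hB by simp
  qed
  have eC: "struct_embedding C dC RC (B' \<union> C') dN R hC"
    unfolding struct_embedding_def
  proof (intro conjI ballI)
    show "hC ` C \<subseteq> B' \<union> C'" unfolding C'_def by blast
    fix x y assume xy: "x \<in> C" "y \<in> C"
    have m: "hC x \<in> C'" "hC y \<in> C'" using xy unfolding C'_def by auto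
    show "dN (hC x) (hC y) = dC x y" using ip_d[OF ipC xy] .
    show "R (hC x) (hC y) = RC x y" using R(3) m RN0_CC[OF m] iC_hC by simp
  qed
  have "\<forall>a\<in>A. hB (f a) = hC (g a)" using hBf by blast
  then show ?thesis using M eB eC by blast
qed

end


lemma AP:
  fixes A :: "'c set" and B :: "'d set" and C :: "'e set"
  assumes "RFR_model A dA RA" "RFR_model B dB RB" "RFR_model C dC RC"
    "struct_embedding A dA RA B dB RB f" "struct_embedding A dA RA C dC RC g"
  shows "\<exists>(N::('d + 'e) set set) dN RN h k.
          RFR_model N dN RN \<and>
          struct_embedding B dB RB N dN RN h \<and>
          struct_embedding C dC RC N dN RN k \<and>
          (\<forall>a\<in>A. h (f a) = k (g a))"
  using ap.amalg[OF ap.intro[OF assms]] .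

lemma empty_model: "RFR_model {} d R"
  unfolding RFR_model_def r_forest_def ext_metric_def ext_complete_def lip_1_1_def by simp

lemma empty_emb: "struct_embedding {} d R S d' R' f"
  unfolding struct_embedding_def by simp

theorem proposition2p20:
  shows
   "(\<forall>(S1::'a set) d1 R1 (S2::'b set) d2 R2.
       RFR_model S1 d1 R1 \<and> RFR_model S2 d2 R2 \<longrightarrow>
       (\<exists>(N::('a + 'b) set set) dN RN f g.
          RFR_model N dN RN \<and>
          struct_embedding S1 d1 R1 N dN RN f \<and>
          struct_embedding S2 d2 R2 N dN RN g))
    \<and>
    (\<forall>(A::'c set) dA RA (B::'d set) dB RB (C::'e set) dC RC f g.
       RFR_model A dA RA \<and> RFR_model B dB RB \<and> RFR_model C dC RC \<and>
       struct_embedding A dA RA B dB RB f \<and> struct_embedding A dA RA C dC RC g \<longrightarrow>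
       (\<exists>(N::('d + 'e) set set) dN RN h k.
          RFR_model N dN RN \<and>
          struct_embedding B dB RB N dN RN h \<and>
          struct_embedding C dC RC N dN RN k \<and>
          (\<forall>a\<in>A. h (f a) = k (g a))))"
  apply (rule conjI)
   apply (intro allI impI)
   apply (elim conjE)
  subgoal premises p for S1 d1 R1 S2 d2 R2
    using AP[of "{}::'a set" d1 R1 S1 d1 R1 S2 d2 R2 id "\<lambda>_. undefined", OF empty_model p(1) p(2) empty_emb empty_emb]
    apply (elim exE conjE)
    apply (intro exI conjI)
      apply assumption+
    done
  apply (intro allI impI)
  apply (elim conjE)
  apply (rule AP)
      apply assumption+
  done


end
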